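(* Let $k>2d_{\text{sp}}$. Consider $k$ environments where, in environment $e_i$, $y=1$ with probability $\eta$ and $y=-1$ otherwise; conditionally on $Y=y$, ${\mathbf x}_{\text{ns}}\sim\mathcal{N}(y\mu_{\text{ns}},\Sigma_{\text{ns}})$ and ${\mathbf x}_{\text{sp}}\sim\mathcal{N}(y\mu_i,\Sigma_i)$, drawn independently, with $\mu_{\text{ns}}\in\mathbb{R}^{d_{\text{ns}}}$, $\Sigma_{\text{ns}}\in\mathbb{S}^{d_{\text{ns}}}_{++}$, $\mu_i\in\mathbb{R}^{d_{\text{sp}}}$, $\Sigma_i\in\mathbb{S}^{d_{\text{sp}}}_{++}$. Let $\sigma:\mathbb{R}\to(0,1)$ be invertible and consider classifiers $f({\mathbf x};{\mathbf w},b)=\sigma({\mathbf w}^\top{\mathbf x}-b)$ with ${\mathbf w}=[{\mathbf w}_{\text{ns}},{\mathbf w}_{\text{sp}}]$. If the environments $\{\Sigma_i,\mu_i\}_{i=1}^k$ lie in general position, then every such classifier that is calibrated on all $k$ environments satisfies ${\mathbf w}_{\text{sp}}=\mathbf{0}$.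
   Context: $\mathbb{S}^d_{++}$ denotes the $d\times d$ symmetric positive definite matrices. A classifier $f$ is calibrated on environments $e_1,\dots,e_k$ if for each $i$ and every $\alpha$ in the range of $f$ restricted to $e_i$, $P[Y=1\mid f(X)=\alpha,E=e_i]=\alpha$. Given $k>2d_{\text{sp}}$ environments with parameters $\{\Sigma_i,\mu_i\}_{i=1}^k$, they are in general position if for every nonzero ${\mathbf x}\in\mathbb{R}^{d_{\text{sp}}}$, the vectors $\begin{bmatrix}\Sigma_i{\mathbf x}+\mu_i\\ 1\end{bmatrix}\in\mathbb{R}^{d_{\text{sp}}+1}$, $i\in[k]$, span a subspace of dimension $d_{\text{sp}}+1$. *)

theory Defs
  imports "HOL-Probability.Probability"
begin

definition spd :: "real^'d^'d \<Rightarrow> bool" where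
  "spd S \<longleftrightarrow> transpose S = S \<and> (\<forall>x. x \<noteq> 0 \<longrightarrow> x \<bullet> (S *v x) > 0)"

definition gauss_pdf :: "real^'d \<Rightarrow> real^'d^'d \<Rightarrow> real^'d \<Rightarrow> real" where
  "gauss_pdf mu S x =
     exp (- (1/2) * ((x - mu) \<bullet> (matrix_inv S *v (x - mu))))
     / sqrt ((2 * pi) ^ CARD('d) * det S)"

definition lab :: "bool \<Rightarrow> real" where
  "lab y = (if y then 1 else -1)"

definition env_measure ::
  "real \<Rightarrow> real^'ns \<Rightarrow> real^'ns^'ns \<Rightarrow> real^'sp \<Rightarrow> real^'sp^'sp
     \<Rightarrow> (bool \<times> ((real^'ns) \<times> (real^'sp))) measure" where
  "env_measure eta mu_ns S_ns mu S =
     density (count_space UNIV \<Otimes>\<^sub>M (lborel \<Otimes>\<^sub>M lborel))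
       (\<lambda>(y, (xn, xs)). ennreal ((if y then eta else 1 - eta)
            * gauss_pdf (lab y *\<^sub>R mu_ns) S_ns xn * gauss_pdf (lab y *\<^sub>R mu) S xs))"

text \<open>Calibration of a score f : X -> (0,1) w.r.t. a joint law M of (Y, X):
  P[Y = 1 | f(X)] = f(X) almost surely, i.e. for every Borel set A,
  P[Y = 1, f(X) \<in> A] = E[f(X) 1{f(X) \<in> A}].\<close>
definition calibrated_on :: "('x \<Rightarrow> real) \<Rightarrow> (bool \<times> 'x) measure \<Rightarrow> bool" where
  "calibrated_on f M \<longleftrightarrow>
     (\<forall>A \<in> sets borel.
        measure M {z \<in> space M. fst z \<and> f (snd z) \<in> A}
        = (\<integral>z. indicator {z \<in> space M. f (snd z) \<in> A} z * f (snd z) \<partial>M))"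

definition general_position :: "nat \<Rightarrow> (nat \<Rightarrow> real^'sp^'sp) \<Rightarrow> (nat \<Rightarrow> real^'sp) \<Rightarrow> bool" where
  "general_position k S mu \<longleftrightarrow>
     (\<forall>x::real^'sp. x \<noteq> 0 \<longrightarrow>
        dim ({(S i *v x + mu i, 1::real) | i. i < k} :: ((real^'sp) \<times> real) set) = CARD('sp) + 1)"

definition lin_clf :: "(real \<Rightarrow> real) \<Rightarrow> real^'ns \<Rightarrow> real^'sp \<Rightarrow> real
     \<Rightarrow> (real^'ns) \<times> (real^'sp) \<Rightarrow> real" where
  "lin_clf sig w_ns w_sp b = (\<lambda>(xn, xs). sig (w_ns \<bullet> xn + w_sp \<bullet> xs - b))"

end

theory Submission
  imports Defs
begin


lemma inner_approx:
  fixes \<mu> :: "real measure"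
  assumes fin: "finite_measure \<mu>" and sb: "sets \<mu> = sets borel" and E: "E \<in> sets borel" and d: "d > 0"
  shows "\<exists>K. compact K \<and> K \<subseteq> E \<and> measure \<mu> (E - K) < d"
proof -
  interpret finite_measure \<mu> by fact
  have sp: "space \<mu> = UNIV" using sets_eq_imp_space_eq[OF sb] by simp
  have eq: "emeasure \<mu> E = (SUP K \<in> {K. K \<subseteq> E \<and> compact K}. emeasure \<mu> K)"
    by (rule inner_regular[OF sb _ E]) simp
  show ?thesis
  proof (cases "measure \<mu> E < d")
    case True
    then show ?thesis by (intro exI[of _ "{}"]) auto
  next
    case False
    then have "ennreal (measure \<mu> E - d) < emeasure \<mu> E"
      using d by (simp add: emeasure_eq_measure ennreal_lessI)
    then obtain K where K: "K \<subseteq> E" "compact K" "ennreal (measure \<mu> E - d) < emeasure \<mu> K"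
      unfolding eq by (auto simp: less_SUP_iff)
    have Ks: "K \<in> sets \<mu>" using K(2) sb by (simp add: borel_compact)
    have "measure \<mu> E - d < measure \<mu> K"
      using K(3) False d by (simp add: emeasure_eq_measure ennreal_less_iff)
    moreover have "measure \<mu> (E - K) = measure \<mu> E - measure \<mu> K"
      using Ks E sb K(1) by (intro finite_measure_Diff) auto
    ultimately show ?thesis using K by (intro exI[of _ K]) auto
  qed
qed

lemma lusin_real:
  fixes f :: "real \<Rightarrow> real" and \<mu> :: "real measure"
  assumes fin: "finite_measure \<mu>" and sb: "sets \<mu> = sets borel"
    and fm: "f \<in> borel_measurable borel" and e: "e > 0"
  shows "\<exists>K. closed K \<and> measure \<mu> (- K) < e \<and> continuous_on K f"
proof -
  interpret finite_measure \<mu> by fact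
  obtain BB :: "real set set" where BB: "countable BB" "\<And>C. C \<in> BB \<Longrightarrow> open C"
    "\<And>S. open S \<Longrightarrow> \<exists>U. U \<subseteq> BB \<and> S = \<Union>U"
    using univ_second_countable by blast
  have ne: "BB \<noteq> {}" using BB(3)[of UNIV] by auto
  define V where "V n = from_nat_into BB n" for n
  have VB: "range V = BB" using ne BB(1) by (simp add: V_def)
  define d where "d n = e / 8 * (1/2)^n" for n :: nat
  have dpos: "d n > 0" for n using e by (simp add: d_def)
  define E where "E n = f -` V n" for n
  have Eb: "E n \<in> sets borel" for n
    unfolding E_def using fm BB(2) VB
    by (metis borel_open measurable_sets rangeI space_borel vimage_Int Int_UNIV_right)
  have Ecb: "- E n \<in> sets borel" for n using Eb by auto
  have "\<forall>n. \<exists>K. compact K \<and> K \<subseteq> E n \<and> measure \<mu> (E n - K) < d n"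
    using inner_approx[OF fin sb Eb dpos] by blast
  then obtain K where K: "\<And>n. compact (K n) \<and> K n \<subseteq> E n \<and> measure \<mu> (E n - K n) < d n"
    by metis
  have "\<forall>n. \<exists>K. compact K \<and> K \<subseteq> - E n \<and> measure \<mu> (- E n - K) < d n"
    using inner_approx[OF fin sb Ecb dpos] by blast
  then obtain K' where K': "\<And>n. compact (K' n) \<and> K' n \<subseteq> - E n \<and> measure \<mu> (- E n - K' n) < d n"
    by metis
  define KK where "KK = (\<Inter>n. K n \<union> K' n)"
  have clK: "closed KK" unfolding KK_def using K K'
    by (intro closed_INT) (meson closed_Un compact_imp_closed)
  have sets_b: "A \<in> sets borel \<Longrightarrow> A \<in> sets \<mu>" for A using sb by simp
  have Kb: "K n \<in> sets borel" "K' n \<in> sets borel" for n using K K'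
    by (auto intro: borel_compact)
  have cov: "- (K n \<union> K' n) \<subseteq> (E n - K n) \<union> (- E n - K' n)" for n by auto
  have s1: "E n - K n \<in> sets \<mu>" "- E n - K' n \<in> sets \<mu>" for n
    using Eb Kb sb by auto
  have s3: "- (K n \<union> K' n) \<in> sets \<mu>" for n using Kb sb by auto
  have mle: "measure \<mu> (- (K n \<union> K' n)) \<le> 2 * d n" for n
  proof -
    have "measure \<mu> (- (K n \<union> K' n)) \<le> measure \<mu> ((E n - K n) \<union> (- E n - K' n))"
      by (rule finite_measure_mono[OF cov]) (use s1 in blast)
    also have "\<dots> \<le> measure \<mu> (E n - K n) + measure \<mu> (- E n - K' n)"
      by (rule measure_subadditive) (simp_all add: s1 emeasure_finite)
    also have "\<dots> \<le> 2 * d n" using K[of n] K'[of n] by simp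
    finally show ?thesis .
  qed
  have sum2: "(\<lambda>n. 2 * d n) sums (e / 2)"
  proof -
    have "(\<lambda>n. (1/2::real)^n) sums 2" using geometric_sums[of "1/2::real"] by simp
    from sums_mult[OF this, of "e/4"] show ?thesis by (simp add: d_def algebra_simps)
  qed
  have summ: "summable (\<lambda>n. measure \<mu> (- (K n \<union> K' n)))"
    by (rule summable_comparison_test'[OF sums_summable[OF sum2], of 0]) (use mle in auto)
  have "measure \<mu> (- KK) = measure \<mu> (\<Union>n. - (K n \<union> K' n))"
    unfolding KK_def by simp
  also have "\<dots> \<le> (\<Sum>n. measure \<mu> (- (K n \<union> K' n)))"
    by (rule finite_measure_subadditive_countably[OF _ summ]) (use s3 in blast)
  also have "\<dots> \<le> (\<Sum>n. 2 * d n)"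
    by (rule suminf_le[OF mle summ sums_summable[OF sum2]])
  also have "\<dots> = e / 2" using sum2 by (simp add: sums_iff)
  also have "\<dots> < e" using e by simp
  finally have meas: "measure \<mu> (- KK) < e" .
  have cont: "continuous_on KK f"
    unfolding continuous_on_topological
  proof (intro ballI allI impI)
    fix x B assume x: "x \<in> KK" and B: "open B" "f x \<in> B"
    obtain U where U: "U \<subseteq> BB" "B = \<Union>U" using BB(3)[OF B(1)] by auto
    then obtain C where C: "C \<in> BB" "f x \<in> C" "C \<subseteq> B" using B(2) by auto
    then obtain n where n: "C = V n" using VB by auto
    have xE: "x \<in> E n" using C n by (simp add: E_def)
    then have xK': "x \<notin> K' n" using K' by auto
    show "\<exists>A. open A \<and> x \<in> A \<and> (\<forall>y\<in>KK. y \<in> A \<longrightarrow> f y \<in> B)"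
    proof (intro exI[of _ "- K' n"] conjI ballI impI)
      show "open (- K' n)" using K' compact_imp_closed by blast
      show "x \<in> - K' n" using xK' by simp
      fix y assume "y \<in> KK" "y \<in> - K' n"
      then have "y \<in> K n" unfolding KK_def by auto
      then have "y \<in> E n" using K by auto
      then show "f y \<in> B" using C n by (auto simp: E_def)
    qed
  qed
  show ?thesis using clK meas cont by blast
qed

lemma inj_preimage_approx:
  fixes f :: "real \<Rightarrow> real" and \<mu> :: "real measure"
  assumes fin: "finite_measure \<mu>" and sb: "sets \<mu> = sets borel"
    and fm: "f \<in> borel_measurable borel" and inj: "inj f" and B: "B \<in> sets borel"
  shows "\<exists>A \<in> sets borel. f -` A \<subseteq> B \<and> emeasure \<mu> (B - f -` A) = 0"
proof -
  interpret finite_measure \<mu> by fact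
  have "\<forall>n::nat. \<exists>K. closed K \<and> measure \<mu> (- K) < 1 / real (Suc n) \<and> continuous_on K f"
    using lusin_real[OF fin sb fm] by simp
  then obtain K where K: "\<And>n. closed (K n) \<and> measure \<mu> (- K n) < 1 / real (Suc n) \<and> continuous_on (K n) f"
    by metis
  have BK: "B \<inter> K n \<in> sets borel" for n using B K by auto
  have "\<forall>n::nat. \<exists>C. compact C \<and> C \<subseteq> B \<inter> K n \<and> measure \<mu> (B \<inter> K n - C) < 1 / real (Suc n)"
    using inner_approx[OF fin sb BK] by simp
  then obtain C where C: "\<And>n. compact (C n) \<and> C n \<subseteq> B \<inter> K n \<and> measure \<mu> (B \<inter> K n - C n) < 1 / real (Suc n)"
    by metis
  have cimg: "compact (f ` C n)" for n
    using C[of n] K[of n] by (meson compact_continuous_image continuous_on_subset le_infE)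
  define A where "A = (\<Union>n. f ` C n)"
  have Ab: "A \<in> sets borel" unfolding A_def using cimg
    by (intro sets.countable_UN) (auto intro: borel_compact)
  have pre: "f -` A = (\<Union>n. C n)" unfolding A_def using inj
    by (auto simp: inj_vimage_image_eq vimage_Union)
  have sub: "f -` A \<subseteq> B" using pre C by blast
  have Cb: "C n \<in> sets borel" for n using C by (auto intro: borel_compact)
  have Kb: "K n \<in> sets borel" for n using K by auto
  have le: "measure \<mu> (B - f -` A) \<le> 2 / real (Suc n)" for n
  proof -
    have "B - f -` A \<subseteq> (- K n) \<union> (B \<inter> K n - C n)" using pre by auto
    then have "measure \<mu> (B - f -` A) \<le> measure \<mu> ((- K n) \<union> (B \<inter> K n - C n))"
      by (rule finite_measure_mono) (use Kb Cb B sb in auto)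
    also have "\<dots> \<le> measure \<mu> (- K n) + measure \<mu> (B \<inter> K n - C n)"
      by (rule measure_subadditive) (use Kb Cb B sb in \<open>simp_all add: emeasure_finite\<close>)
    also have "\<dots> \<le> 2 / real (Suc n)" using K[of n] C[of n] by simp
    finally show ?thesis .
  qed
  have z: "measure \<mu> (B - f -` A) = 0"
  proof (rule ccontr)
    assume "measure \<mu> (B - f -` A) \<noteq> 0"
    then have pos: "measure \<mu> (B - f -` A) > 0" using measure_nonneg[of \<mu>] by (simp add: less_le)
    obtain n where n: "inverse (real (Suc n)) < measure \<mu> (B - f -` A) / 2"
      using reals_Archimedean[of "measure \<mu> (B - f -` A) / 2"] pos by auto
    then show False using le[of n] by (simp add: field_simps)
  qed
  have "emeasure \<mu> (B - f -` A) = 0"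
    using z by (simp add: emeasure_eq_measure)
  then show ?thesis using Ab sub by blast
qed

lemma ae_le_from_preimage:
  fixes f h1 h2 :: "real \<Rightarrow> real"
  assumes fm: "f \<in> borel_measurable borel" and inj: "inj f"
    and h1m: "h1 \<in> borel_measurable borel" and h2m: "h2 \<in> borel_measurable borel"
    and nn1: "\<And>t. 0 \<le> h1 t" and nn2: "\<And>t. 0 \<le> h2 t"
    and i1: "integrable lborel h1" and i2: "integrable lborel h2"
    and eq: "\<And>A. A \<in> sets borel \<Longrightarrow>
       (\<integral>t. indicator (f -` A) t * h1 t \<partial>lborel) = (\<integral>t. indicator (f -` A) t * h2 t \<partial>lborel)"
  shows "AE t in lborel. h1 t \<le> h2 t"
proof -
  define \<mu> where "\<mu> = density lborel (\<lambda>t. ennreal (h1 t + h2 t))"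
  have sb: "sets \<mu> = sets borel" by (simp add: \<mu>_def)
  have int12: "integrable lborel (\<lambda>t. h1 t + h2 t)" using i1 i2 by simp
  have fin: "finite_measure \<mu>"
  proof
    have "emeasure \<mu> (space \<mu>) = (\<integral>\<^sup>+t. ennreal (h1 t + h2 t) \<partial>lborel)"
      unfolding \<mu>_def using h1m h2m by (subst emeasure_density) auto
    also have "\<dots> < \<infinity>" using int12 nn1 nn2 by (simp add: integrable_iff_bounded add_nonneg_nonneg)
    finally show "emeasure \<mu> (space \<mu>) \<noteq> \<infinity>" by simp
  qed
  define B where "B = {t. h2 t < h1 t}"
  have Bb: "B \<in> sets borel" unfolding B_def using h1m h2m by measurable
  obtain A where A: "A \<in> sets borel" "f -` A \<subseteq> B" "emeasure \<mu> (B - f -` A) = 0"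
    using inj_preimage_approx[OF fin sb fm inj Bb] by blast
  have fAb: "f -` A \<in> sets borel" using fm A(1) by (metis measurable_sets space_borel vimage_Int Int_UNIV_right)
  have Db: "B - f -` A \<in> sets borel" using Bb fAb by auto
  have "(\<integral>\<^sup>+t. ennreal (h1 t + h2 t) * indicator (B - f -` A) t \<partial>lborel) = 0"
    using A(3) Db h1m h2m unfolding \<mu>_def by (subst (asm) emeasure_density) auto
  then have "AE t in lborel. ennreal (h1 t + h2 t) * indicator (B - f -` A) t = 0"
    by (subst (asm) nn_integral_0_iff_AE) (use Db h1m h2m in auto)
  then have aeD: "AE t in lborel. t \<notin> B - f -` A"
  proof (rule AE_mp, intro AE_I2 impI)
    fix t assume *: "ennreal (h1 t + h2 t) * indicator (B - f -` A) t = 0"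
    show "t \<notin> B - f -` A"
    proof
      assume tD: "t \<in> B - f -` A"
      then have "h2 t < h1 t" by (simp add: B_def)
      then have "h1 t + h2 t > 0" using nn2[of t] by linarith
      then show False using * tD by simp
    qed
  qed
  have aeeq: "AE t in lborel. indicator B t * (h1 t - h2 t) = indicator (f -` A) t * (h1 t - h2 t)"
    using aeD by eventually_elim (use A(2) in \<open>auto split: split_indicator\<close>)
  have iB: "integrable lborel (\<lambda>t. indicator B t * (h1 t - h2 t))"
    using i1 i2 Bb by (subst mult.commute, intro integrable_real_mult_indicator) auto
  have iA: "integrable lborel (\<lambda>t. indicator (f -` A) t * (h1 t - h2 t))"
    using i1 i2 fAb by (subst mult.commute, intro integrable_real_mult_indicator) auto
  have iA1: "integrable lborel (\<lambda>t. indicator (f -` A) t * h1 t)"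
    using i1 fAb by (subst mult.commute, intro integrable_real_mult_indicator) auto
  have iA2: "integrable lborel (\<lambda>t. indicator (f -` A) t * h2 t)"
    using i2 fAb by (subst mult.commute, intro integrable_real_mult_indicator) auto
  have "(\<integral>t. indicator B t * (h1 t - h2 t) \<partial>lborel) = (\<integral>t. indicator (f -` A) t * (h1 t - h2 t) \<partial>lborel)"
    by (rule integral_cong_AE) (use aeeq iB iA in auto)
  also have "\<dots> = (\<integral>t. indicator (f -` A) t * h1 t - indicator (f -` A) t * h2 t \<partial>lborel)"
    by (simp add: algebra_simps)
  also have "\<dots> = 0" using eq[OF A(1)] iA1 iA2 by simp
  finally have I0: "(\<integral>t. indicator B t * (h1 t - h2 t) \<partial>lborel) = 0" .
  have nnB: "\<And>t. 0 \<le> indicator B t * (h1 t - h2 t)"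
    by (auto simp: B_def split: split_indicator)
  have "AE t in lborel. indicator B t * (h1 t - h2 t) = 0"
    using I0 iB nnB by (subst (asm) integral_nonneg_eq_0_iff_AE) auto
  then show ?thesis
    by eventually_elim (auto simp: B_def indicator_def split: if_splits)
qed


lemma additive_mono_linear:
  fixes G :: "real \<Rightarrow> real"
  assumes add: "\<And>x y. 0 \<le> x \<Longrightarrow> 0 \<le> y \<Longrightarrow> G (x + y) = G x + G y"
    and mono: "\<And>x y. 0 \<le> x \<Longrightarrow> x \<le> y \<Longrightarrow> G x \<le> G y"
    and d: "0 \<le> d"
  shows "G d = G 1 * d"
proof -
  have mult: "G (real n * x) = real n * G x" if "0 \<le> x" for n x
  proof (induction n)
    case 0
    have "G (0 + 0) = G 0 + G 0" using add[of 0 0] by simp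
    then show ?case by simp
  next
    case (Suc n)
    have "G (real (Suc n) * x) = G (real n * x + x)" by (simp add: algebra_simps)
    also have "\<dots> = G (real n * x) + G x" using that by (intro add) auto
    finally show ?case using Suc by (simp add: algebra_simps)
  qed
  have inv: "G (1 / real n) = G 1 / real n" if "n > 0" for n
    using mult[of "1 / real n" n] that by (simp add: field_simps)
  have frac: "G (real k / real n) = real k * G 1 / real n" if "n > 0" for k n
    using mult[of "1 / real n" k] inv[OF that] by (simp add: field_simps)
  have G0: "G 0 = 0" using add[of 0 0] by simp
  have G1: "G 1 \<ge> 0" using mono[of 0 1] G0 by simp
  have bound: "\<bar>G d - G 1 * d\<bar> \<le> G 1 / real n" if n: "n > 0" for n
  proof -
    define k where "k = nat \<lfloor>real n * d\<rfloor>"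
    have k1: "real k \<le> real n * d" using d n by (simp add: k_def)
    have k2: "real n * d < real k + 1" using d n by (simp add: k_def)
    have l: "real k / real n \<le> d" using k1 n by (simp add: field_simps)
    have u: "d \<le> real (k + 1) / real n" using k2 n by (simp add: field_simps)
    have "G (real k / real n) \<le> G d" by (rule mono) (use l in auto)
    then have lo: "real k * G 1 / real n \<le> G d" by (simp only: frac[OF n])
    have "G d \<le> G (real (k + 1) / real n)" by (rule mono) (use d u in auto)
    then have hi: "G d \<le> real (k + 1) * G 1 / real n" by (simp only: frac[OF n])
    have a: "real k * G 1 / real n \<le> G 1 * d" using l G1 n
      by (metis mult.commute mult_left_mono times_divide_eq_right)
    have b: "G 1 * d \<le> real (k + 1) * G 1 / real n" using u G1 n
      by (metis mult.commute mult_left_mono times_divide_eq_right)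
    have e: "real (k + 1) * G 1 / real n = real k * G 1 / real n + G 1 / real n"
      using n by (simp add: field_simps)
    show ?thesis using lo hi a b e by linarith
  qed
  show ?thesis
  proof (rule ccontr)
    assume "G d \<noteq> G 1 * d"
    then have pos: "\<bar>G d - G 1 * d\<bar> > 0" by simp
    obtain n where n: "G 1 / \<bar>G d - G 1 * d\<bar> < real n" using reals_Archimedean2 by blast
    have "0 \<le> G 1 / \<bar>G d - G 1 * d\<bar>" using G1 pos by simp
    then have "0 < real n" using n by linarith
    then have n0: "n > 0" by simp
    have "G 1 < real n * \<bar>G d - G 1 * d\<bar>" using n pos by (simp add: field_simps)
    then have "G 1 / real n < \<bar>G d - G 1 * d\<bar>" using n0 by (simp add: field_simps)
    then show False using bound[OF n0] by simp
  qed
qed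

lemma transl_inv_unique:
  fixes \<nu> :: "real measure"
  assumes sb: "sets \<nu> = sets borel"
    and inv: "\<And>\<tau> B. B \<in> sets borel \<Longrightarrow> emeasure \<nu> ((\<lambda>x. x + \<tau>) -` B) = emeasure \<nu> B"
    and C1: "emeasure \<nu> {0..<1} = ennreal C" and Cpos: "C > 0"
  shows "\<nu> = density lborel (\<lambda>_. ennreal C)"
proof -
  define F where "F d = emeasure \<nu> {0..<d}" for d :: real
  have shift: "emeasure \<nu> {a..<a + d} = F d" for a d
  proof -
    have "{a..<a + d} = (\<lambda>x. x + (- a)) -` {0..<d}" by auto
    then show ?thesis unfolding F_def using inv[of "{0..<d}" "- a"] by simp
  qed
  have Fadd: "F (x + y) = F x + F y" if "0 \<le> x" "0 \<le> y" for x y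
  proof -
    have "{0..<x + y} = {0..<x} \<union> {x..<x + y}" using that by auto
    then have "F (x + y) = emeasure \<nu> ({0..<x} \<union> {x..<x + y})" by (simp add: F_def)
    also have "\<dots> = emeasure \<nu> {0..<x} + emeasure \<nu> {x..<x + y}"
      by (rule plus_emeasure[symmetric]) (use sb in auto)
    finally show ?thesis using shift by (simp add: F_def)
  qed
  have Fmono: "F x \<le> F y" if "x \<le> y" for x y
    unfolding F_def by (rule emeasure_mono) (use that sb in auto)
  have Fnat: "F (real n) = of_nat n * ennreal C" for n
  proof (induction n)
    case 0 then show ?case by (simp add: F_def)
  next
    case (Suc n)
    have "F (real (Suc n)) = F (real n + 1)" by (simp add: add.commute)
    also have "\<dots> = F (real n) + F 1" by (rule Fadd) auto
    finally show ?case using Suc C1 by (simp add: F_def algebra_simps)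
  qed
  have Ffin: "F d < \<infinity>" if "0 \<le> d" for d
  proof -
    obtain n where "d \<le> real n" using real_arch_simple by blast
    then have "F d \<le> F (real n)" by (rule Fmono)
    also have "\<dots> < \<infinity>" by (simp add: Fnat ennreal_of_nat_eq_real_of_nat ennreal_mult_less_top)
    finally show ?thesis .
  qed
  define G where "G d = enn2real (F d)" for d
  have FG: "F d = ennreal (G d)" if "0 \<le> d" for d
    using Ffin[OF that] by (simp add: G_def ennreal_enn2real_if less_top[symmetric])
  have Gadd: "G (x + y) = G x + G y" if "0 \<le> x" "0 \<le> y" for x y
  proof -
    have "G (x + y) = enn2real (F x + F y)" using Fadd[OF that] by (simp add: G_def)
    also have "\<dots> = G x + G y" unfolding G_def
      by (rule enn2real_plus) (use Ffin that in auto)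
    finally show ?thesis .
  qed
  have Gmono: "G x \<le> G y" if "0 \<le> x" "x \<le> y" for x y
    using Fmono[OF that(2)] Ffin that unfolding G_def
    by (intro enn2real_mono) auto
  have G1: "G 1 = C" using C1 Cpos by (simp add: G_def F_def)
  have Glin: "G d = C * d" if "0 \<le> d" for d
    using additive_mono_linear[of G d] Gadd Gmono that G1 by simp
  have single: "emeasure \<nu> {a} = 0" for a
  proof -
    have le: "emeasure \<nu> {a} \<le> ennreal (C / real (Suc n))" for n
    proof -
      have "emeasure \<nu> {a} \<le> emeasure \<nu> {a..<a + 1 / real (Suc n)}"
        by (rule emeasure_mono) (use sb in auto)
      also have "\<dots> = ennreal (C / real (Suc n))"
        using shift FG Glin by simp
      finally show ?thesis .
    qed
    obtain r where r: "emeasure \<nu> {a} = ennreal r" "0 \<le> r"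
      using le[of 0] by (cases "emeasure \<nu> {a}" rule: ennreal_cases) (auto simp: top_unique)
    have rle: "r \<le> C / real (Suc n)" for n using le[of n] r Cpos by simp
    have "r = 0"
    proof (rule ccontr)
      assume "r \<noteq> 0" then have rp: "r > 0" using r by simp
      obtain n where n: "inverse (real (Suc n)) < r / C"
        using reals_Archimedean[of "r / C"] rp Cpos by auto
      then show False using rle[of n] Cpos by (simp add: field_simps)
    qed
    then show ?thesis using r by simp
  qed
  have box: "emeasure \<nu> {a<..<b} = ennreal (C * (b - a))" if "a \<le> b" for a b
  proof (cases "a = b")
    case True then show ?thesis by simp
  next
    case False
    then have ab: "a < b" using that by simp
    have "{a<..<b} = {a..<a + (b - a)} - {a}" by auto
    then have "emeasure \<nu> {a<..<b} = emeasure \<nu> ({a..<a + (b - a)} - {a})" by simp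
    also have "\<dots> = emeasure \<nu> {a..<a + (b - a)} - emeasure \<nu> {a}"
      by (rule emeasure_Diff) (use sb single ab in auto)
    also have "\<dots> = ennreal (C * (b - a))" using shift[of a "b - a"] FG[of "b - a"] Glin[of "b - a"] that single by simp
    finally show ?thesis .
  qed
  have L: "lborel = density \<nu> (\<lambda>_. ennreal (1 / C))"
  proof (rule lborel_eqI)
    fix l u :: real assume "\<And>b. b \<in> Basis \<Longrightarrow> l \<bullet> b \<le> u \<bullet> b"
    then have lu: "l \<le> u" by simp
    have "emeasure (density \<nu> (\<lambda>_. ennreal (1 / C))) (box l u) = ennreal (1 / C) * emeasure \<nu> {l<..<u}"
      using sb by (subst emeasure_density) (auto simp: box_real nn_integral_cmult_indicator)
    also have "\<dots> = ennreal (u - l)" using box[OF lu] Cpos lu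
      by (simp add: ennreal_mult'[symmetric])
    finally show "emeasure (density \<nu> (\<lambda>_. ennreal (1 / C))) (box l u) = (\<Prod>b\<in>Basis. (u - l) \<bullet> b)"
      by simp
  qed (use sb in simp)
  have "density lborel (\<lambda>_. ennreal C) = density (density \<nu> (\<lambda>_. ennreal (1 / C))) (\<lambda>_. ennreal C)"
    using L by simp
  also have "\<dots> = density \<nu> (\<lambda>_. ennreal (1 / C) * ennreal C)"
    by (subst density_density_eq) (use sb in auto)
  also have "\<dots> = density \<nu> (\<lambda>_. 1)"
    using Cpos by (simp add: ennreal_mult'[symmetric])
  also have "\<dots> = \<nu>" by (simp add: density_1)
  finally show ?thesis by simp
qed


context
  fixes A :: "'a::euclidean_space \<Rightarrow> 'a" and w e :: 'a
  assumes lin: "linear A"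
    and sym: "\<And>x y. x \<bullet> A y = A x \<bullet> y"
    and pd: "\<And>x. x \<noteq> 0 \<Longrightarrow> x \<bullet> A x > 0"
    and Ae: "A e = w"
    and vpos: "w \<bullet> e > 0"
begin

lemma Acont: "continuous_on S A"
  using lin by (simp add: linear_continuous_on linear_conv_bounded_linear)

lemma Ameas: "A \<in> borel_measurable borel"
  by (rule borel_measurable_continuous_onI[OF Acont])

lemma Q_scale: "(c *\<^sub>R x) \<bullet> A (c *\<^sub>R x) = c^2 * (x \<bullet> A x)"
  using lin by (simp add: linear_scale power2_eq_square)

lemma Q_lower: "\<exists>l>0. \<forall>x. l * (norm x)^2 \<le> x \<bullet> A x"
proof -
  have cont: "continuous_on (sphere (0::'a) 1) (\<lambda>x. x \<bullet> A x)"
    by (intro continuous_intros Acont)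
  have ne: "sphere (0::'a) 1 \<noteq> {}" by simp
  obtain x0 where x0: "x0 \<in> sphere 0 1" "\<And>y. y \<in> sphere 0 1 \<Longrightarrow> x0 \<bullet> A x0 \<le> y \<bullet> A y"
    using continuous_attains_inf[OF compact_sphere ne cont] by blast
  have x0nz: "x0 \<noteq> 0" using x0(1) by auto
  have lpos: "x0 \<bullet> A x0 > 0" using pd[OF x0nz] .
  show ?thesis
  proof (intro exI[of _ "x0 \<bullet> A x0"] conjI allI lpos)
    fix x :: 'a
    show "(x0 \<bullet> A x0) * (norm x)^2 \<le> x \<bullet> A x"
    proof (cases "x = 0")
      case True then show ?thesis using lin by (simp add: linear_0)
    next
      case False
      define y where "y = (1 / norm x) *\<^sub>R x"
      have ys: "y \<in> sphere 0 1" using False by (simp add: y_def)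
      have xy: "x = norm x *\<^sub>R y" using False by (simp add: y_def)
      have "x \<bullet> A x = (norm x)^2 * (y \<bullet> A y)"
        by (subst xy, subst xy, rule Q_scale)
      then show ?thesis using mult_right_mono[OF x0(2)[OF ys], of "(norm x)^2"]
        by (simp add: mult.commute)
    qed
  qed
qed

lemma gauss_1d_fin:
  assumes l: "l > 0"
  shows "(\<integral>\<^sup>+t. ennreal (exp (- (l * t^2) / 2)) \<partial>lborel) < \<infinity>"
proof -
  define \<sigma> where "\<sigma> = 1 / sqrt l"
  have s2: "\<sigma>^2 = 1 / l" using l by (simp add: \<sigma>_def power_divide)
  define K where "K = sqrt (2 * pi * \<sigma>^2)"
  have eq: "exp (- (l * t^2) / 2) = K * normal_density 0 \<sigma> t" for t
    using l unfolding normal_density_def K_def s2 by (simp add: field_simps)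
  have "(\<integral>\<^sup>+t. ennreal (exp (- (l * t^2) / 2)) \<partial>lborel) = (\<integral>\<^sup>+t. ennreal K * ennreal (normal_density 0 \<sigma> t) \<partial>lborel)"
    by (intro nn_integral_cong, subst eq) (simp add: K_def ennreal_mult)
  also have "\<dots> = ennreal K * (\<integral>\<^sup>+t. ennreal (normal_density 0 \<sigma> t) \<partial>lborel)"
    by (rule nn_integral_cmult) simp
  also have "\<dots> < \<infinity>"
  proof -
    have "(\<integral>\<^sup>+t. ennreal (normal_density 0 \<sigma> t) \<partial>lborel) < \<infinity>"
      using l by (subst nn_integral_eq_integral) (auto simp: \<sigma>_def intro!: integrable_normal_density)
    then show ?thesis by (simp add: ennreal_mult_less_top)
  qed
  finally show ?thesis .
qed

lemma gauss_fin: "(\<integral>\<^sup>+x. ennreal (exp (- (x \<bullet> A x) / 2)) \<partial>lborel) < \<infinity>"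
proof -
  obtain l where l: "l > 0" "\<And>x. l * (norm x)^2 \<le> x \<bullet> A x" using Q_lower by blast
  have bnd: "ennreal (exp (- (x \<bullet> A x) / 2)) \<le> ennreal (\<Prod>b\<in>Basis. exp (- (l * (x \<bullet> b)^2) / 2))" for x
  proof -
    have n2: "(norm x)^2 = (\<Sum>b\<in>Basis. (x \<bullet> b)^2)"
    proof -
      have "(norm x)^2 = x \<bullet> x" by (simp add: dot_square_norm)
      also have "\<dots> = (\<Sum>b\<in>Basis. (x \<bullet> b) * (x \<bullet> b))" by (rule euclidean_inner)
      finally show ?thesis by (simp add: power2_eq_square)
    qed
    have "(\<Prod>b\<in>Basis. exp (- (l * (x \<bullet> b)^2) / 2)) = exp (\<Sum>b\<in>Basis. - (l * (x \<bullet> b)^2) / 2)"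
      by (simp add: exp_sum)
    also have "(\<Sum>b\<in>Basis. - (l * (x \<bullet> b)^2) / 2) = - (l * (norm x)^2) / 2"
      by (simp add: n2 sum_divide_distrib[symmetric] sum_distrib_left sum_negf)
    finally have "(\<Prod>b\<in>Basis. exp (- (l * (x \<bullet> b)^2) / 2)) = exp (- (l * (norm x)^2) / 2)" .
    moreover have "exp (- (x \<bullet> A x) / 2) \<le> exp (- (l * (norm x)^2) / 2)"
      using l(2)[of x] by simp
    ultimately show "ennreal (exp (- (x \<bullet> A x) / 2)) \<le> ennreal (\<Prod>b\<in>Basis. exp (- (l * (x \<bullet> b)^2) / 2))"
      by (simp add: ennreal_leI)
  qed
  have "(\<integral>\<^sup>+x. ennreal (exp (- (x \<bullet> A x) / 2)) \<partial>lborel)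
      \<le> (\<integral>\<^sup>+x. ennreal (\<Prod>b\<in>Basis. exp (- (l * (x \<bullet> b)^2) / 2)) \<partial>(lborel::'a measure))"
    by (rule nn_integral_mono) (rule bnd)
  also have "\<dots> = (\<integral>\<^sup>+x. (\<Prod>b\<in>Basis. ennreal (exp (- (l * (x \<bullet> b)^2) / 2))) \<partial>(lborel::'a measure))"
    by (simp add: prod_ennreal)
  also have "\<dots> = (\<Prod>b\<in>(Basis::'a set). (\<integral>\<^sup>+t. ennreal (exp (- (l * t^2) / 2)) \<partial>lborel))"
    by (rule nn_integral_lborel_prod) auto
  also have "\<dots> < \<infinity>"
    using gauss_1d_fin[OF l(1)] by (simp add: less_top[symmetric] power_eq_top_ennreal)
  finally show ?thesis .
qed

definition "proj x = x - ((w \<bullet> x) / (w \<bullet> e)) *\<^sub>R e"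

lemma Q_decomp: "x \<bullet> A x = (w \<bullet> x)^2 / (w \<bullet> e) + proj x \<bullet> A (proj x)"
proof -
  define v where "v = w \<bullet> e"
  define c where "c = (w \<bullet> x) / v"
  have v: "v > 0" using vpos by (simp add: v_def)
  have ex: "e \<bullet> A x = w \<bullet> x" using sym[of e x] Ae by (simp add: inner_commute)
  have ee: "e \<bullet> w = v" by (simp add: v_def inner_commute)
  have "proj x \<bullet> A (proj x) = (x - c *\<^sub>R e) \<bullet> (A x - c *\<^sub>R w)"
    using lin by (simp add: proj_def c_def v_def linear_diff linear_scale Ae)
  also have "\<dots> = x \<bullet> A x - c * (x \<bullet> w) - c * (e \<bullet> A x) + c * c * (e \<bullet> w)"
    by (simp add: inner_diff_left inner_diff_right algebra_simps)
  also have "\<dots> = x \<bullet> A x - (w \<bullet> x)^2 / v"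
    using v by (simp add: ex ee c_def inner_commute field_simps power2_eq_square)
  finally show ?thesis by (simp add: v_def)
qed

lemma proj_shift: "proj (c *\<^sub>R e + x) = proj x"
  using vpos by (simp add: proj_def inner_add_right field_simps scaleR_add_left[symmetric]
      del: scaleR_add_left)

lemma w_shift: "w \<bullet> (c *\<^sub>R e + x) = c * (w \<bullet> e) + w \<bullet> x"
  by (simp add: inner_add_right)

lemma proj_meas: "proj \<in> borel_measurable borel"
  unfolding proj_def[abs_def] using Ameas by measurable


lemma gauss_marginal:
  "\<exists>C>0. \<forall>g::real \<Rightarrow> ennreal. g \<in> borel_measurable borel \<longrightarrow>
     (\<integral>\<^sup>+x. g (w \<bullet> x) * ennreal (exp (- (x \<bullet> A x) / 2)) \<partial>lborel)
       = ennreal C * (\<integral>\<^sup>+t. g t * ennreal (exp (- (t^2) / (2 * (w \<bullet> e)))) \<partial>lborel)"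
proof -
  note [measurable] = Ameas proj_meas
  define v where "v = w \<bullet> e"
  have v: "v > 0" using vpos by (simp add: v_def)
  define \<psi> where "\<psi> x = exp (- (proj x \<bullet> A (proj x)) / 2)" for x
  have \<psi>m[measurable]: "\<psi> \<in> borel_measurable borel" unfolding \<psi>_def[abs_def] by measurable
  have \<psi>pos: "\<psi> x > 0" for x by (simp add: \<psi>_def)
  define D where "D = density lborel (\<lambda>x. ennreal (\<psi> x))"
  define \<nu> where "\<nu> = distr D borel (\<lambda>x. w \<bullet> x)"
  have wm: "(\<lambda>x. w \<bullet> x) \<in> D \<rightarrow>\<^sub>M borel" unfolding D_def by simp
  have sn: "sets \<nu> = sets borel" by (simp add: \<nu>_def)
  have em: "emeasure \<nu> B = (\<integral>\<^sup>+x. ennreal (\<psi> x) * indicator B (w \<bullet> x) \<partial>lborel)"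
    if B: "B \<in> sets borel" for B
  proof -
    have pre: "(\<lambda>x. w \<bullet> x) -` B \<in> sets borel"
      using measurable_sets[OF wm B] by (simp add: D_def)
    have "emeasure \<nu> B = emeasure D ((\<lambda>x. w \<bullet> x) -` B \<inter> space D)"
      unfolding \<nu>_def by (rule emeasure_distr[OF wm B])
    also have "\<dots> = emeasure D ((\<lambda>x. w \<bullet> x) -` B)" by (simp add: D_def)
    also have "\<dots> = (\<integral>\<^sup>+x. ennreal (\<psi> x) * indicator ((\<lambda>x. w \<bullet> x) -` B) x \<partial>lborel)"
      unfolding D_def by (rule emeasure_density) (use pre in auto)
    also have "\<dots> = (\<integral>\<^sup>+x. ennreal (\<psi> x) * indicator B (w \<bullet> x) \<partial>lborel)"
      by (simp add: indicator_def)
    finally show ?thesis .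
  qed
  have inv: "emeasure \<nu> ((\<lambda>x. x + \<tau>) -` B) = emeasure \<nu> B" if B: "B \<in> sets borel" for \<tau> B
  proof -
    have tm: "(\<lambda>x::real. x + \<tau>) \<in> borel \<rightarrow>\<^sub>M borel" by simp
    have pre: "(\<lambda>x. x + \<tau>) -` B \<in> sets borel"
      using measurable_sets[OF tm B] by simp
    define c where "c = (\<tau> / v) *\<^sub>R e"
    define f where "f x = ennreal (\<psi> x) * indicator B (w \<bullet> x)" for x
    have fm: "f \<in> borel_measurable borel" unfolding f_def using B by measurable
    have fc: "f (c + x) = ennreal (\<psi> x) * indicator B (w \<bullet> x + \<tau>)" for x
    proof -
      have "proj (c + x) = proj x" unfolding c_def by (rule proj_shift)
      moreover have "w \<bullet> (c + x) = w \<bullet> x + \<tau>" unfolding c_def using v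
        by (simp add: w_shift v_def)
      ultimately show ?thesis by (simp add: f_def \<psi>_def)
    qed
    have "emeasure \<nu> ((\<lambda>x. x + \<tau>) -` B) = (\<integral>\<^sup>+x. ennreal (\<psi> x) * indicator B (w \<bullet> x + \<tau>) \<partial>lborel)"
      using em[OF pre] by (simp add: indicator_def)
    also have "\<dots> = (\<integral>\<^sup>+x. f (c + x) \<partial>lborel)" by (simp add: fc)
    also have "\<dots> = (\<integral>\<^sup>+x. f x \<partial>distr lborel borel ((+) c))"
      by (rule nn_integral_distr[symmetric]) (use fm in auto)
    also have "\<dots> = (\<integral>\<^sup>+x. f x \<partial>lborel)" by (simp add: lborel_distr_plus)
    also have "\<dots> = emeasure \<nu> B" using em[OF B] by (simp add: f_def)
    finally show ?thesis .
  qed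
  have fin: "emeasure \<nu> {0..<1} < \<infinity>"
  proof -
    have pt: "ennreal (\<psi> x) * indicator {0..<1} (w \<bullet> x) \<le> ennreal (exp (1 / (2 * v))) * ennreal (exp (- (x \<bullet> A x) / 2))" for x
    proof (cases "w \<bullet> x \<in> {0..<1}")
      case True
      then have sq: "(w \<bullet> x)^2 \<le> 1" by (simp add: power_le_one)
      have "\<psi> x = exp (- (x \<bullet> A x) / 2 + (w \<bullet> x)^2 / (2 * v))"
        unfolding \<psi>_def using Q_decomp[of x] v by (simp add: v_def field_simps)
      also have "\<dots> \<le> exp (- (x \<bullet> A x) / 2 + 1 / (2 * v))"
        using sq v by (simp add: divide_right_mono)
      also have "\<dots> = exp (1 / (2 * v)) * exp (- (x \<bullet> A x) / 2)"
        by (simp add: exp_add[symmetric])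
      finally show ?thesis using True by (simp add: ennreal_mult[symmetric] ennreal_leI)
    next
      case False then show ?thesis by simp
    qed
    have "emeasure \<nu> {0..<1} \<le> (\<integral>\<^sup>+x. ennreal (exp (1 / (2 * v))) * ennreal (exp (- (x \<bullet> A x) / 2)) \<partial>lborel)"
      unfolding em[of "{0..<1}", simplified] by (rule nn_integral_mono) (rule pt)
    also have "\<dots> = ennreal (exp (1 / (2 * v))) * (\<integral>\<^sup>+x. ennreal (exp (- (x \<bullet> A x) / 2)) \<partial>lborel)"
      by (rule nn_integral_cmult) simp
    also have "\<dots> < \<infinity>" using gauss_fin by (simp add: ennreal_mult_less_top)
    finally show ?thesis .
  qed
  have pos: "emeasure \<nu> {0..<1} \<noteq> 0"
  proof
    assume z: "emeasure \<nu> {0..<1} = 0"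
    have zn: "{real_of_int n..<real_of_int n + 1} \<in> null_sets \<nu>" for n
    proof -
      have "{real_of_int n..<real_of_int n + 1} = (\<lambda>x. x + (- real_of_int n)) -` {0..<1}" by auto
      then have "emeasure \<nu> {real_of_int n..<real_of_int n + 1} = 0"
        using inv[of "{0..<1}" "- real_of_int n"] z by simp
      then show ?thesis using sn by auto
    qed
    have "(\<Union>n\<in>(UNIV::int set). {real_of_int n..<real_of_int n + 1}) \<in> null_sets \<nu>"
      by (rule null_sets_UN') (use zn in auto)
    moreover have "(\<Union>n\<in>(UNIV::int set). {real_of_int n..<real_of_int n + 1}) = UNIV"
    proof (safe)
      fix x :: real
      show "x \<in> (\<Union>n. {real_of_int n..<real_of_int n + 1})"
        by (rule UN_I[of "\<lfloor>x\<rfloor>"]) simp_all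
    qed auto
    ultimately have "emeasure \<nu> UNIV = 0" by auto
    then have "(\<integral>\<^sup>+x. ennreal (\<psi> x) \<partial>lborel) = 0" using em[of UNIV] by simp
    then have "AE x in lborel. ennreal (\<psi> x) = 0"
      by (subst (asm) nn_integral_0_iff_AE) auto
    then have "AE x in (lborel::'a measure). False"
      by eventually_elim (use \<psi>pos in \<open>auto simp: less_le\<close>)
    then have "UNIV \<in> null_sets (lborel::'a measure)"
      by (subst AE_iff_null_sets) auto
    then have "emeasure (lborel::'a measure) UNIV = 0" by (simp add: null_sets_def)
    then show False by simp
  qed
  obtain C where C: "emeasure \<nu> {0..<1} = ennreal C" "C > 0"
    using fin pos by (cases "emeasure \<nu> {0..<1}" rule: ennreal_cases) (auto simp: less_le)
  have nu: "\<nu> = density lborel (\<lambda>_. ennreal C)"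
    by (rule transl_inv_unique[OF sn inv C])
  show ?thesis
  proof (intro exI[of _ C] conjI allI impI C(2))
    fix g :: "real \<Rightarrow> ennreal" assume gm[measurable]: "g \<in> borel_measurable borel"
    define G where "G t = g t * ennreal (exp (- (t^2) / (2 * v)))" for t
    have Gm[measurable]: "G \<in> borel_measurable borel" unfolding G_def[abs_def] by measurable
    have pt: "g (w \<bullet> x) * ennreal (exp (- (x \<bullet> A x) / 2)) = ennreal (\<psi> x) * G (w \<bullet> x)" for x
    proof -
      have "exp (- (x \<bullet> A x) / 2) = \<psi> x * exp (- ((w \<bullet> x)^2) / (2 * v))"
        unfolding \<psi>_def using Q_decomp[of x] v by (simp add: v_def field_simps exp_add[symmetric])
      moreover have "0 \<le> \<psi> x" using \<psi>pos[of x] by simp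
      ultimately show ?thesis by (simp add: G_def ennreal_mult mult_ac)
    qed
    have "(\<integral>\<^sup>+x. g (w \<bullet> x) * ennreal (exp (- (x \<bullet> A x) / 2)) \<partial>lborel)
        = (\<integral>\<^sup>+x. ennreal (\<psi> x) * G (w \<bullet> x) \<partial>lborel)" by (rule nn_integral_cong) (rule pt)
    also have "\<dots> = (\<integral>\<^sup>+x. G (w \<bullet> x) \<partial>D)"
      unfolding D_def by (rule nn_integral_density[symmetric]) auto
    also have "\<dots> = (\<integral>\<^sup>+t. G t \<partial>\<nu>)"
      unfolding \<nu>_def by (rule nn_integral_distr[symmetric]) (use wm in auto)
    also have "\<dots> = (\<integral>\<^sup>+t. ennreal C * G t \<partial>lborel)"
      unfolding nu by (rule nn_integral_density) auto
    also have "\<dots> = ennreal C * (\<integral>\<^sup>+t. G t \<partial>lborel)"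
      by (rule nn_integral_cmult) simp
    finally show "(\<integral>\<^sup>+x. g (w \<bullet> x) * ennreal (exp (- (x \<bullet> A x) / 2)) \<partial>lborel)
       = ennreal C * (\<integral>\<^sup>+t. g t * ennreal (exp (- (t^2) / (2 * (w \<bullet> e)))) \<partial>lborel)"
      by (simp add: G_def v_def)
  qed
qed

end


lemma inner_transpose_sym:
  fixes P :: "real^'d^'d"
  assumes "transpose P = P"
  shows "u \<bullet> (P *v v) = (P *v u) \<bullet> v"
proof -
  have "u \<bullet> (P *v v) = (u v* P) \<bullet> v" by (simp add: dot_lmul_matrix)
  also have "u v* P = P *v u"
    using vector_transpose_matrix[of u P] assms by simp
  finally show ?thesis .
qed

lemma spd_nonneg:
  assumes "spd S" shows "0 \<le> x \<bullet> (S *v x)"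
  using assms unfolding spd_def by (cases "x = 0") (auto simp: less_imp_le)

lemma spd_invertible:
  fixes S :: "real^'d^'d"
  assumes "\<And>x. x \<noteq> 0 \<Longrightarrow> x \<bullet> (S *v x) > 0"
  shows "invertible S"
proof -
  have "\<forall>x. S *v x = 0 \<longrightarrow> x = 0"
  proof (intro allI impI)
    fix x assume "S *v x = 0"
    then have "x \<bullet> (S *v x) = 0" by simp
    then show "x = 0" using assms[of x] by (cases "x = 0") auto
  qed
  then show ?thesis
    using matrix_left_invertible_ker invertible_left_inverse by blast
qed

lemma spd_det_pos:
  fixes S :: "real^'d^'d"
  assumes "spd S" shows "det S > 0"
proof -
  define M where "M t = (1 - t) *\<^sub>R S + t *\<^sub>R (mat 1 :: real^'d^'d)" for t :: real
  have pdS: "\<And>x. x \<noteq> 0 \<Longrightarrow> x \<bullet> (S *v x) > 0" using assms by (simp add: spd_def)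
  have nz: "det (M t) \<noteq> 0" if t: "0 \<le> t" "t \<le> 1" for t
  proof -
    have "x \<bullet> (M t *v x) > 0" if x: "x \<noteq> 0" for x
    proof -
      have eq: "x \<bullet> (M t *v x) = (1 - t) * (x \<bullet> (S *v x)) + t * (x \<bullet> x)"
        by (simp add: M_def matrix_vector_mult_add_rdistrib scaleR_matrix_vector_assoc[symmetric] inner_add_right)
      have a: "x \<bullet> (S *v x) > 0" using pdS[OF x] .
      have b: "x \<bullet> x > 0" using x by simp
      show ?thesis
      proof (cases "t = 1")
        case True then show ?thesis using eq b by simp
      next
        case False
        then have "1 - t > 0" using t by simp
        then have "(1 - t) * (x \<bullet> (S *v x)) > 0" using a by simp
        moreover have "t * (x \<bullet> x) \<ge> 0" using t b by simp
        ultimately show ?thesis using eq by linarith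
      qed
    qed
    then have "invertible (M t)" by (rule spd_invertible)
    then show ?thesis by (simp add: invertible_det_nz)
  qed
  have ent: "M t $ i $ j = (1 - t) * S $ i $ j + t * (mat 1 :: real^'d^'d) $ i $ j" for t i j
    by (simp add: M_def)
  have cont: "continuous_on {0..1} (\<lambda>t. det (M t))"
    unfolding det_def ent by (intro continuous_intros)
  have M0: "M 0 = S" by (simp add: M_def)
  have M1: "M 1 = mat 1" by (simp add: M_def)
  show ?thesis
  proof (rule ccontr)
    assume "\<not> det S > 0"
    then have "det (M 0) \<le> 0" using M0 by simp
    moreover have "0 \<le> det (M 1)" using M1 by simp
    ultimately obtain t where "0 \<le> t" "t \<le> 1" "det (M t) = 0"
      using IVT'[of "\<lambda>t. det (M t)" 0 0 1] cont by auto
    then show False using nz by blast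
  qed
qed

lemma spd_facts:
  fixes S :: "real^'d^'d"
  assumes sp: "spd S"
  defines "P \<equiv> matrix_inv S"
  shows "S ** P = mat 1" "P ** S = mat 1" "transpose P = P"
    "\<And>x. x \<noteq> 0 \<Longrightarrow> x \<bullet> (P *v x) > 0" "det S > 0"
proof -
  have pdS: "\<And>x. x \<noteq> 0 \<Longrightarrow> x \<bullet> (S *v x) > 0" and tS: "transpose S = S"
    using sp by (auto simp: spd_def)
  have inv: "invertible S" by (rule spd_invertible[OF pdS])
  have both: "S ** P = mat 1 \<and> P ** S = mat 1"
    unfolding P_def matrix_inv_def using inv unfolding invertible_def by (rule someI_ex)
  then show SP: "S ** P = mat 1" and PS: "P ** S = mat 1" by auto
  have "transpose P ** S = mat 1"
    using arg_cong[OF SP, of transpose] tS by (simp add: matrix_transpose_mul)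
  then have "transpose P = transpose P ** (S ** P)" using SP by simp
  also have "\<dots> = P" using \<open>transpose P ** S = mat 1\<close> by (simp add: matrix_mul_assoc)
  finally show tP: "transpose P = P" .
  show "x \<bullet> (P *v x) > 0" if x: "x \<noteq> 0" for x
  proof -
    define y where "y = P *v x"
    have Sy: "S *v y = x" using SP by (simp add: y_def matrix_vector_mul_assoc)
    have y0: "y \<noteq> 0" using Sy x by auto
    have "x \<bullet> (P *v x) = (S *v y) \<bullet> y" using Sy by (simp add: y_def)
    also have "\<dots> = y \<bullet> (S *v y)" by (simp add: inner_commute)
    also have "\<dots> > 0" using pdS[OF y0] .
    finally show ?thesis .
  qed
  show "det S > 0" by (rule spd_det_pos[OF sp])
qed


lemma mv_meas[measurable]:
  fixes P :: "real^'n^'m"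
  assumes "f \<in> borel_measurable M"
  shows "(\<lambda>x. P *v f x) \<in> borel_measurable M"
  using borel_measurable_continuous_on[OF _ assms, of "\<lambda>x. P *v x"]
  by (simp add: linear_continuous_on)

lemma gauss_pdf_meas[measurable]: "gauss_pdf m S \<in> borel_measurable borel"
  unfolding gauss_pdf_def[abs_def] by measurable

definition blockA :: "real^'n^'n \<Rightarrow> real^'m^'m \<Rightarrow> (real^'n) \<times> (real^'m) \<Rightarrow> (real^'n) \<times> (real^'m)" where
  "blockA P1 P2 x = (P1 *v fst x, P2 *v snd x)"

lemma pd_nonneg:
  fixes P :: "real^'n^'n"
  assumes "\<And>x. x \<noteq> 0 \<Longrightarrow> x \<bullet> (P *v x) > 0"
  shows "0 \<le> x \<bullet> (P *v x)"
  using assms[of x] by (cases "x = 0") auto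

lemma blockA_props:
  fixes P1 :: "real^'n^'n" and P2 :: "real^'m^'m"
  assumes t1: "transpose P1 = P1" and t2: "transpose P2 = P2"
    and p1: "\<And>x. x \<noteq> 0 \<Longrightarrow> x \<bullet> (P1 *v x) > 0"
    and p2: "\<And>x. x \<noteq> 0 \<Longrightarrow> x \<bullet> (P2 *v x) > 0"
  shows "linear (blockA P1 P2)"
    "\<And>x y. x \<bullet> blockA P1 P2 y = blockA P1 P2 x \<bullet> y"
    "\<And>x. x \<noteq> 0 \<Longrightarrow> x \<bullet> blockA P1 P2 x > 0"
proof -
  show "linear (blockA P1 P2)"
    by (rule linearI) (auto simp: blockA_def matrix_vector_right_distrib matrix_vector_mult_scaleR)
  show "x \<bullet> blockA P1 P2 y = blockA P1 P2 x \<bullet> y" for x y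
    using inner_transpose_sym[OF t1, of "fst x" "fst y"] inner_transpose_sym[OF t2, of "snd x" "snd y"]
    by (simp add: blockA_def inner_prod_def)
  show "x \<bullet> blockA P1 P2 x > 0" if x: "x \<noteq> 0" for x
  proof -
    have eq: "x \<bullet> blockA P1 P2 x = fst x \<bullet> (P1 *v fst x) + snd x \<bullet> (P2 *v snd x)"
      by (simp add: blockA_def inner_prod_def)
    show ?thesis
    proof (cases "fst x = 0")
      case True
      then have "snd x \<noteq> 0" using x by (cases x) (auto simp: zero_prod_def)
      then show ?thesis using eq p2 True by simp
    next
      case False
      then show ?thesis using eq p1[OF False] pd_nonneg[OF p2, of "snd x"] by simp
    qed
  qed
qed

lemma gauss_pdf_eq:
  fixes S :: "real^'d^'d"
  shows "gauss_pdf m S x = (1 / sqrt ((2 * pi) ^ CARD('d) * det S)) * exp (- ((x - m) \<bullet> (matrix_inv S *v (x - m))) / 2)"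
  by (simp add: gauss_pdf_def)


lemma meas_bool_pair:
  fixes F :: "bool \<Rightarrow> 'b \<Rightarrow> ennreal"
  assumes "\<And>y. F y \<in> borel_measurable N"
  shows "(\<lambda>z. F (fst z) (snd z)) \<in> borel_measurable (count_space (UNIV::bool set) \<Otimes>\<^sub>M N)"
  by (rule measurable_compose_countable'[where f="\<lambda>y z. F y (snd z)" and g=fst and I=UNIV])
     (auto intro: measurable_compose[OF measurable_snd assms])

lemma shift_nn:
  fixes f :: "'a::euclidean_space \<Rightarrow> ennreal"
  assumes "f \<in> borel_measurable borel"
  shows "(\<integral>\<^sup>+x. f x \<partial>lborel) = (\<integral>\<^sup>+x. f (c + x) \<partial>lborel)"
proof -
  have "(\<integral>\<^sup>+x. f x \<partial>lborel) = (\<integral>\<^sup>+x. f x \<partial>distr lborel borel ((+) c))"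
    by (simp add: lborel_distr_plus)
  also have "\<dots> = (\<integral>\<^sup>+x. f (c + x) \<partial>lborel)"
    by (rule nn_integral_distr) (use assms in auto)
  finally show ?thesis .
qed

lemma env_integral:
  fixes mu_ns :: "real^'ns" and S_ns :: "real^'ns^'ns" and mu :: "real^'sp" and S :: "real^'sp^'sp"
    and w_ns :: "real^'ns" and w_sp :: "real^'sp" and b eta :: real
  assumes spd_ns: "spd S_ns" and spd_s: "spd S" and wnz: "w_sp \<noteq> 0"
    and eta: "0 \<le> eta" "eta \<le> 1"
  defines "v \<equiv> w_ns \<bullet> (S_ns *v w_ns) + w_sp \<bullet> (S *v w_sp)"
    and "mw \<equiv> w_ns \<bullet> mu_ns + w_sp \<bullet> mu"
  shows "v > 0"
    and "\<exists>K>0. \<forall>H::bool \<Rightarrow> real \<Rightarrow> ennreal. (\<forall>y. H y \<in> borel_measurable borel) \<longrightarrow>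
    (\<integral>\<^sup>+z. H (fst z) (w_ns \<bullet> fst (snd z) + w_sp \<bullet> snd (snd z) - b) \<partial>env_measure eta mu_ns S_ns mu S)
    = (\<Sum>y\<in>UNIV. ennreal (K * (if y then eta else 1 - eta)) *
        (\<integral>\<^sup>+t. H y t * ennreal (exp (- ((t - (lab y * mw - b))^2) / (2 * v))) \<partial>lborel))"
proof -
  define P1 where "P1 = matrix_inv S_ns"
  define P2 where "P2 = matrix_inv S"
  note f1 = spd_facts[OF spd_ns, folded P1_def]
  note f2 = spd_facts[OF spd_s, folded P2_def]
  define A where "A = blockA P1 P2"
  note Ap = blockA_props[OF f1(3) f2(3) f1(4) f2(4), folded A_def]
  define w where "w = (w_ns, w_sp)"
  define e where "e = (S_ns *v w_ns, S *v w_sp)"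
  have Ae: "A e = w" using f1(2) f2(2)
    by (simp add: A_def blockA_def e_def w_def matrix_vector_mul_assoc)
  have we: "w \<bullet> e = v" by (simp add: w_def e_def v_def)
  show vpos: "v > 0"
  proof -
    have "0 \<le> w_ns \<bullet> (S_ns *v w_ns)" by (rule spd_nonneg[OF spd_ns])
    moreover have "0 < w_sp \<bullet> (S *v w_sp)" using spd_s wnz by (simp add: spd_def)
    ultimately show ?thesis by (simp add: v_def)
  qed
  have vpos': "w \<bullet> e > 0" using vpos we by simp
  obtain C where C: "C > 0" and marg: "\<And>g::real \<Rightarrow> ennreal. g \<in> borel_measurable borel \<Longrightarrow>
     (\<integral>\<^sup>+x. g (w \<bullet> x) * ennreal (exp (- (x \<bullet> A x) / 2)) \<partial>lborel)
       = ennreal C * (\<integral>\<^sup>+t. g t * ennreal (exp (- (t^2) / (2 * (w \<bullet> e)))) \<partial>lborel)"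
    using gauss_marginal[OF Ap(1) Ap(2) Ap(3) Ae vpos'] by blast
  have Am[measurable]: "A \<in> borel_measurable borel" using Ap(1)
    by (intro borel_measurable_continuous_onI linear_continuous_on) (simp add: linear_conv_bounded_linear)
  define Kn where "Kn = 1 / sqrt ((2 * pi) ^ CARD('ns) * det S_ns)"
  define Ks where "Ks = 1 / sqrt ((2 * pi) ^ CARD('sp) * det S)"
  have Kn: "Kn > 0" using f1(5) by (simp add: Kn_def)
  have Ks: "Ks > 0" using f2(5) by (simp add: Ks_def)
  define p where "p y = (if y then eta else 1 - eta)" for y :: bool
  have p: "p y \<ge> 0" for y using eta by (simp add: p_def)
  define c where "c y = (lab y *\<^sub>R mu_ns, lab y *\<^sub>R mu)" for y
  have wc: "w \<bullet> c y = lab y * mw" for y by (simp add: w_def c_def mw_def algebra_simps)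
  define Dn' where "Dn' y x = ennreal (p y * gauss_pdf (lab y *\<^sub>R mu_ns) S_ns (fst x) * gauss_pdf (lab y *\<^sub>R mu) S (snd x))"
    for y and x :: "(real^'ns) \<times> (real^'sp)"
  have envd: "env_measure eta mu_ns S_ns mu S = density (count_space UNIV \<Otimes>\<^sub>M (lborel \<Otimes>\<^sub>M lborel)) (\<lambda>z. Dn' (fst z) (snd z))"
    unfolding env_measure_def Dn'_def p_def by (intro arg_cong2[where f=density] refl ext) (auto split: prod.splits)
  have Dn_eq: "Dn' y x = ennreal (p y * Kn * Ks) * ennreal (exp (- ((x - c y) \<bullet> A (x - c y)) / 2))" for y x
  proof -
    obtain xn xs where x: "x = (xn, xs)" by (cases x)
    have q: "(x - c y) \<bullet> A (x - c y) = (xn - lab y *\<^sub>R mu_ns) \<bullet> (P1 *v (xn - lab y *\<^sub>R mu_ns))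
       + (xs - lab y *\<^sub>R mu) \<bullet> (P2 *v (xs - lab y *\<^sub>R mu))"
      by (simp add: x c_def A_def blockA_def)
    have r: "p y * gauss_pdf (lab y *\<^sub>R mu_ns) S_ns xn * gauss_pdf (lab y *\<^sub>R mu) S xs
        = (p y * Kn * Ks) * exp (- ((x - c y) \<bullet> A (x - c y)) / 2)"
    proof -
      have gen: "p y * (Kn * exp (- q1 / 2)) * (Ks * exp (- q2 / 2)) = p y * Kn * Ks * exp (- (q1 + q2) / 2)" for q1 q2
      proof -
        have "exp (- (q1 + q2) / 2) = exp (- q1 / 2) * exp (- q2 / 2)"
          by (subst exp_add[symmetric]) (simp add: field_simps)
        then show ?thesis by simp
      qed
      show ?thesis
        unfolding q gauss_pdf_eq P1_def[symmetric] P2_def[symmetric] Kn_def[symmetric] Ks_def[symmetric]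
        by (rule gen)
    qed
    show ?thesis
      by (simp add: Dn'_def x r ennreal_mult[symmetric] p Kn Ks less_imp_le)
  qed
  show "\<exists>K>0. \<forall>H::bool \<Rightarrow> real \<Rightarrow> ennreal. (\<forall>y. H y \<in> borel_measurable borel) \<longrightarrow>
    (\<integral>\<^sup>+z. H (fst z) (w_ns \<bullet> fst (snd z) + w_sp \<bullet> snd (snd z) - b) \<partial>env_measure eta mu_ns S_ns mu S)
    = (\<Sum>y\<in>UNIV. ennreal (K * (if y then eta else 1 - eta)) *
        (\<integral>\<^sup>+t. H y t * ennreal (exp (- ((t - (lab y * mw - b))^2) / (2 * v))) \<partial>lborel))"
  proof (intro exI[of _ "Kn * Ks * C"] conjI allI impI)
    show "Kn * Ks * C > 0" using Kn Ks C by simp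
    fix H :: "bool \<Rightarrow> real \<Rightarrow> ennreal" assume Hm: "\<forall>y. H y \<in> borel_measurable borel"
    have Hm'[measurable]: "H y \<in> borel_measurable borel" for y using Hm by simp
    define s where "s x = w \<bullet> x - b" for x :: "(real^'ns) \<times> (real^'sp)"
    have sz: "w_ns \<bullet> fst (snd z) + w_sp \<bullet> snd (snd z) - b = s (snd z)" for z :: "bool \<times> (real^'ns) \<times> (real^'sp)"
      by (simp add: s_def w_def inner_prod_def)
    have Dm[measurable]: "Dn' y \<in> borel_measurable (lborel \<Otimes>\<^sub>M lborel)" for y
      unfolding Dn'_def by measurable
    have sm[measurable]: "s \<in> borel_measurable (lborel \<Otimes>\<^sub>M lborel)"
      unfolding lborel_prod s_def[abs_def] by measurable
    have sm2[measurable]: "s \<in> borel_measurable borel"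
      unfolding s_def[abs_def] by measurable
    have Fm: "(\<lambda>x. Dn' y x * H y (s x)) \<in> borel_measurable (lborel \<Otimes>\<^sub>M lborel)" for y
      by measurable
    have per_y: "(\<integral>\<^sup>+x. Dn' y x * H y (s x) \<partial>(lborel \<Otimes>\<^sub>M lborel))
      = ennreal (Kn * Ks * C * p y) * (\<integral>\<^sup>+t. H y t * ennreal (exp (- ((t - (lab y * mw - b))^2) / (2 * v))) \<partial>lborel)" for y
    proof -
      define a where "a = ennreal (p y * Kn * Ks)"
      define a' where "a' = lab y * mw - b"
      have "(\<integral>\<^sup>+x. Dn' y x * H y (s x) \<partial>(lborel \<Otimes>\<^sub>M lborel))
          = (\<integral>\<^sup>+x. a * ennreal (exp (- ((x - c y) \<bullet> A (x - c y)) / 2)) * H y (s x) \<partial>lborel)"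
        by (simp add: lborel_prod Dn_eq a_def)
      also have "\<dots> = (\<integral>\<^sup>+x. a * ennreal (exp (- (((c y + x) - c y) \<bullet> A ((c y + x) - c y)) / 2)) * H y (s (c y + x)) \<partial>lborel)"
        by (rule shift_nn) measurable
      also have "\<dots> = (\<integral>\<^sup>+x. a * (H y (w \<bullet> x + a') * ennreal (exp (- (x \<bullet> A x) / 2))) \<partial>lborel)"
        by (simp add: s_def inner_add_right wc a'_def algebra_simps)
      also have "\<dots> = a * (\<integral>\<^sup>+x. H y (w \<bullet> x + a') * ennreal (exp (- (x \<bullet> A x) / 2)) \<partial>lborel)"
        by (rule nn_integral_cmult) measurable
      also have "(\<integral>\<^sup>+x. H y (w \<bullet> x + a') * ennreal (exp (- (x \<bullet> A x) / 2)) \<partial>lborel)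
          = ennreal C * (\<integral>\<^sup>+t. H y (t + a') * ennreal (exp (- (t^2) / (2 * (w \<bullet> e)))) \<partial>lborel)"
      proof -
        have gm: "(\<lambda>t. H y (t + a')) \<in> borel_measurable borel" by measurable
        show ?thesis using marg[OF gm] by simp
      qed
      also have "(\<integral>\<^sup>+t. H y (t + a') * ennreal (exp (- (t^2) / (2 * (w \<bullet> e)))) \<partial>lborel)
          = (\<integral>\<^sup>+t. H y t * ennreal (exp (- ((t - a')^2) / (2 * v))) \<partial>lborel)"
        by (subst shift_nn[of _ a']) (simp_all add: we add.commute)
      finally have fin: "(\<integral>\<^sup>+x. Dn' y x * H y (s x) \<partial>(lborel \<Otimes>\<^sub>M lborel))
          = a * (ennreal C * (\<integral>\<^sup>+t. H y t * ennreal (exp (- ((t - a')^2) / (2 * v))) \<partial>lborel))" .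
      have ka: "ennreal (Kn * Ks * C * p y) = ennreal C * a"
        unfolding a_def by (subst ennreal_mult[symmetric]) (use C Kn Ks p in \<open>auto simp: mult_ac\<close>)
      show ?thesis unfolding ka fin a'_def by (simp add: mult_ac)
    qed
    have "(\<integral>\<^sup>+z. H (fst z) (w_ns \<bullet> fst (snd z) + w_sp \<bullet> snd (snd z) - b) \<partial>env_measure eta mu_ns S_ns mu S)
        = (\<integral>\<^sup>+z. Dn' (fst z) (snd z) * H (fst z) (s (snd z)) \<partial>(count_space UNIV \<Otimes>\<^sub>M (lborel \<Otimes>\<^sub>M lborel)))"
      unfolding envd sz
      by (rule nn_integral_density) (use meas_bool_pair[where F="\<lambda>y x. Dn' y x * H y (s x)", OF Fm] meas_bool_pair[where F=Dn', OF Dm] in auto)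
    also have "\<dots> = (\<integral>\<^sup>+y. (\<integral>\<^sup>+x. Dn' y x * H y (s x) \<partial>(lborel \<Otimes>\<^sub>M lborel)) \<partial>count_space UNIV)"
    proof -
      have sf: "sigma_finite_measure (lborel \<Otimes>\<^sub>M lborel :: ((real^'ns) \<times> (real^'sp)) measure)"
        by (simp add: lborel_prod lborel.sigma_finite_measure_axioms)
      show ?thesis
        by (subst sigma_finite_measure.nn_integral_fst[OF sf, symmetric])
           (auto intro: meas_bool_pair[where F="\<lambda>y x. Dn' y x * H y (s x)", simplified] Fm)
    qed
    also have "\<dots> = (\<Sum>y\<in>UNIV. (\<integral>\<^sup>+x. Dn' y x * H y (s x) \<partial>(lborel \<Otimes>\<^sub>M lborel)))"
      by (rule nn_integral_count_space_finite) simp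
    also have "\<dots> = (\<Sum>y\<in>UNIV. ennreal (Kn * Ks * C * (if y then eta else 1 - eta)) *
        (\<integral>\<^sup>+t. H y t * ennreal (exp (- ((t - (lab y * mw - b))^2) / (2 * v))) \<partial>lborel))"
      by (simp add: per_y p_def)
    finally show "(\<integral>\<^sup>+z. H (fst z) (w_ns \<bullet> fst (snd z) + w_sp \<bullet> snd (snd z) - b) \<partial>env_measure eta mu_ns S_ns mu S)
      = (\<Sum>y\<in>UNIV. ennreal (Kn * Ks * C * (if y then eta else 1 - eta)) *
        (\<integral>\<^sup>+t. H y t * ennreal (exp (- ((t - (lab y * mw - b))^2) / (2 * v))) \<partial>lborel))" .
  qed
qed


lemma gauss_int:
  fixes v m :: real
  assumes v: "v > 0"
  shows "integrable lborel (\<lambda>t. exp (- ((t - m)^2) / (2 * v)))"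
proof -
  have eq: "exp (- ((t - m)^2) / (2 * v)) = sqrt (2 * pi * v) * normal_density m (sqrt v) t" for t
    using v by (simp add: normal_density_def)
  have feq: "(\<lambda>t. exp (- ((t - m)^2) / (2 * v))) = (\<lambda>t. sqrt (2 * pi * v) * normal_density m (sqrt v) t)"
    by (intro ext eq)
  show ?thesis unfolding feq
    by (rule integrable_mult_right, rule integrable_normal_density) (use v in auto)
qed

lemma bounded_int:
  fixes g E :: "real \<Rightarrow> real"
  assumes "integrable lborel E" "g \<in> borel_measurable borel" "\<And>t. \<bar>g t\<bar> \<le> E t"
  shows "integrable lborel g"
proof -
  have gm: "g \<in> borel_measurable lborel" using assms(2) by simp
  show ?thesis
    by (rule Bochner_Integration.integrable_bound[OF assms(1) gm])
       (intro AE_I2, simp, rule order_trans[OF assms(3) abs_ge_self])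
qed

lemma nnconv:
  fixes \<phi> :: "real \<Rightarrow> real"
  assumes "integrable lborel \<phi>" "\<And>t. 0 \<le> \<phi> t"
  shows "(\<integral>\<^sup>+t. ennreal (\<phi> t) \<partial>lborel) = ennreal (\<integral>t. \<phi> t \<partial>lborel)"
  using assms by (intro nn_integral_eq_integral) auto

lemma calib_ae:
  fixes mu_ns :: "real^'ns" and S_ns :: "real^'ns^'ns" and mu :: "real^'sp" and S :: "real^'sp^'sp"
    and w_ns :: "real^'ns" and w_sp :: "real^'sp" and b eta :: real and sig :: "real \<Rightarrow> real"
  assumes spd_ns: "spd S_ns" and spd_s: "spd S" and wnz: "w_sp \<noteq> 0"
    and eta: "0 \<le> eta" "eta \<le> 1"
    and sig_bij: "bij_betw sig UNIV {0<..<1}"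
    and sig_meas[measurable]: "sig \<in> borel_measurable borel"
    and calib: "calibrated_on (lin_clf sig w_ns w_sp b) (env_measure eta mu_ns S_ns mu S)"
  defines "v \<equiv> w_ns \<bullet> (S_ns *v w_ns) + w_sp \<bullet> (S *v w_sp)"
    and "mw \<equiv> w_ns \<bullet> mu_ns + w_sp \<bullet> mu"
  shows "AE t in lborel. eta * (1 - sig t) * exp (- ((t - (mw - b))^2) / (2 * v))
                        = (1 - eta) * sig t * exp (- ((t - (- mw - b))^2) / (2 * v))"
proof -
  have vpos: "v > 0" using env_integral(1)[OF spd_ns spd_s wnz eta] by (simp add: v_def)
  obtain K where K: "K > 0" and EI: "\<And>H::bool \<Rightarrow> real \<Rightarrow> ennreal. (\<forall>y. H y \<in> borel_measurable borel) \<Longrightarrow>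
    (\<integral>\<^sup>+z. H (fst z) (w_ns \<bullet> fst (snd z) + w_sp \<bullet> snd (snd z) - b) \<partial>env_measure eta mu_ns S_ns mu S)
    = (\<Sum>y\<in>UNIV. ennreal (K * (if y then eta else 1 - eta)) *
        (\<integral>\<^sup>+t. H y t * ennreal (exp (- ((t - (lab y * mw - b))^2) / (2 * v))) \<partial>lborel))"
    using env_integral(2)[OF spd_ns spd_s wnz eta] unfolding v_def mw_def by blast
  define M where "M = env_measure eta mu_ns S_ns mu S"
  define f where "f = lin_clf sig w_ns w_sp b"
  define s where "s z = w_ns \<bullet> fst (snd z) + w_sp \<bullet> snd (snd z) - b" for z :: "bool \<times> (real^'ns) \<times> (real^'sp)"
  have fs: "f (snd z) = sig (s z)" for z
    by (cases z) (auto simp: f_def s_def lin_clf_def)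
  have spM: "space M = UNIV" by (simp add: M_def env_measure_def space_pair_measure)
  have setsM: "sets M = sets (count_space UNIV \<Otimes>\<^sub>M (lborel \<Otimes>\<^sub>M lborel))"
    by (simp add: M_def env_measure_def)
  define e1 where "e1 t = exp (- ((t - (mw - b))^2) / (2 * v))" for t
  define e0 where "e0 t = exp (- ((t - (- mw - b))^2) / (2 * v))" for t
  define E where "E y t = exp (- ((t - (lab y * mw - b))^2) / (2 * v))" for y t
  have E1: "E True = e1" and E0: "E False = e0" by (auto simp: E_def e1_def e0_def lab_def fun_eq_iff)
  have i1: "integrable lborel e1" unfolding e1_def by (rule gauss_int[OF vpos])
  have i0: "integrable lborel e0" unfolding e0_def by (rule gauss_int[OF vpos])
  have e1p: "e1 t > 0" and e0p: "e0 t > 0" for t by (auto simp: e1_def e0_def)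
  have sig01: "0 < sig t \<and> sig t < 1" for t using sig_bij by (auto simp: bij_betw_def)
  have signn: "0 \<le> sig t" for t using sig01[of t] by simp
  have key: "(\<integral>t. indicator (sig -` A) t * (eta * (1 - sig t) * e1 t) \<partial>lborel)
           = (\<integral>t. indicator (sig -` A) t * ((1 - eta) * sig t * e0 t) \<partial>lborel)"
    if A: "A \<in> sets borel" for A
  proof -
    have Am[measurable]: "A \<in> sets borel" by (fact A)
    have sA[measurable]: "sig -` A \<in> sets borel" using measurable_sets[OF sig_meas A] by simp
    have e1m[measurable]: "e1 \<in> borel_measurable borel" unfolding e1_def[abs_def] by measurable
    have e0m[measurable]: "e0 \<in> borel_measurable borel" unfolding e0_def[abs_def] by measurable
    have m1: "(\<lambda>t. indicator (sig -` A) t * e1 t) \<in> borel_measurable borel" by measurable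
    have m2: "(\<lambda>t. indicator (sig -` A) t * sig t * e1 t) \<in> borel_measurable borel" by measurable
    have m3: "(\<lambda>t. indicator (sig -` A) t * sig t * e0 t) \<in> borel_measurable borel" by measurable
    define I1 where "I1 = (\<integral>t. indicator (sig -` A) t * e1 t \<partial>lborel)"
    define J1 where "J1 = (\<integral>t. indicator (sig -` A) t * sig t * e1 t \<partial>lborel)"
    define J0 where "J0 = (\<integral>t. indicator (sig -` A) t * sig t * e0 t \<partial>lborel)"
    have iI1: "integrable lborel (\<lambda>t. indicator (sig -` A) t * e1 t)"
      by (rule bounded_int[OF i1 m1]) (auto simp: indicator_def less_imp_le[OF e1p])
    have iJ1: "integrable lborel (\<lambda>t. indicator (sig -` A) t * sig t * e1 t)"
      by (rule bounded_int[OF i1 m2]) (use sig01 e1p in \<open>auto simp: indicator_def abs_mult less_imp_le intro: mult_left_le_one_le\<close>)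
    have iJ0: "integrable lborel (\<lambda>t. indicator (sig -` A) t * sig t * e0 t)"
      by (rule bounded_int[OF i0 m3]) (use sig01 e0p in \<open>auto simp: indicator_def abs_mult less_imp_le intro: mult_left_le_one_le\<close>)
    define H1 where "H1 y t = ennreal (if y then indicator (sig -` A) t else 0)" for y t
    have H1m: "\<forall>y. H1 y \<in> borel_measurable borel" unfolding H1_def by measurable
    define Z where "Z = {z \<in> space M. fst z \<and> f (snd z) \<in> A}"
    have Zind: "indicator Z z = H1 (fst z) (s z)" for z
      by (auto simp: Z_def H1_def spM fs indicator_def)
    have Zs: "Z \<in> sets M"
    proof -
      have "(\<lambda>z. H1 (fst z) (w_ns \<bullet> fst (snd z) + w_sp \<bullet> snd (snd z) - b)) \<in> borel_measurable (count_space UNIV \<Otimes>\<^sub>M (lborel \<Otimes>\<^sub>M lborel))"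
        by (rule meas_bool_pair[where F="\<lambda>y x. H1 y (w_ns \<bullet> fst x + w_sp \<bullet> snd x - b)", simplified])
           (unfold H1_def, measurable)
      moreover have "(indicator Z :: _ \<Rightarrow> ennreal) = (\<lambda>z. H1 (fst z) (w_ns \<bullet> fst (snd z) + w_sp \<bullet> snd (snd z) - b))"
        by (rule ext) (simp add: Zind s_def)
      ultimately have "(indicator Z :: _ \<Rightarrow> ennreal) \<in> borel_measurable M"
        by (simp add: measurable_cong_sets[OF setsM refl])
      then have "Z \<inter> space M \<in> sets M" by (simp only: borel_measurable_indicator_iff)
      moreover have "Z \<inter> space M = Z" by (auto simp: Z_def)
      ultimately show ?thesis by simp
    qed
    have "emeasure M Z = (\<integral>\<^sup>+z. indicator Z z \<partial>M)" using Zs by simp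
    also have "\<dots> = (\<integral>\<^sup>+z. H1 (fst z) (w_ns \<bullet> fst (snd z) + w_sp \<bullet> snd (snd z) - b) \<partial>M)"
      by (simp add: Zind s_def)
    also have "\<dots> = (\<Sum>y\<in>UNIV. ennreal (K * (if y then eta else 1 - eta)) *
        (\<integral>\<^sup>+t. H1 y t * ennreal (E y t) \<partial>lborel))"
      unfolding M_def E_def by (rule EI[OF H1m])
    also have "\<dots> = ennreal (K * eta) * ennreal I1"
    proof -
      have "(\<integral>\<^sup>+t. H1 True t * ennreal (E True t) \<partial>lborel) = (\<integral>\<^sup>+t. ennreal (indicator (sig -` A) t * e1 t) \<partial>lborel)"
        by (intro nn_integral_cong) (simp add: H1_def E1 ennreal_mult')
      also have "\<dots> = ennreal I1" unfolding I1_def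
        by (rule nnconv[OF iI1]) (simp add: less_imp_le[OF e1p])
      finally show ?thesis by (simp add: UNIV_bool H1_def)
    qed
    finally have L: "emeasure M Z = ennreal (K * eta) * ennreal I1" .
    define H2 where "H2 y t = ennreal (indicator (sig -` A) t * sig t)" for y :: bool and t
    have H2m: "\<forall>y. H2 y \<in> borel_measurable borel" unfolding H2_def by measurable
    define Z2 where "Z2 = {z \<in> space M. f (snd z) \<in> A}"
    have Z2f: "indicator Z2 z * f (snd z) = indicator (sig -` A) (s z) * sig (s z)" for z
      by (auto simp: Z2_def spM fs indicator_def)
    have Rm: "(\<lambda>z. indicator Z2 z * f (snd z)) \<in> borel_measurable M"
    proof -
      have "(\<lambda>z. indicator (sig -` A) (w_ns \<bullet> fst (snd z) + w_sp \<bullet> snd (snd z) - b) * sig (w_ns \<bullet> fst (snd z) + w_sp \<bullet> snd (snd z) - b))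
          \<in> borel_measurable (count_space UNIV \<Otimes>\<^sub>M (lborel \<Otimes>\<^sub>M lborel))"
        by measurable
      then show ?thesis unfolding Z2f s_def by (simp add: measurable_cong_sets[OF setsM refl])
    qed
    have "(\<integral>z. indicator Z2 z * f (snd z) \<partial>M) = enn2real (\<integral>\<^sup>+z. ennreal (indicator Z2 z * f (snd z)) \<partial>M)"
      by (rule integral_eq_nn_integral[OF Rm], intro AE_I2) (use sig01 in \<open>auto simp: Z2f less_imp_le\<close>)
    also have "(\<integral>\<^sup>+z. ennreal (indicator Z2 z * f (snd z)) \<partial>M)
        = (\<integral>\<^sup>+z. H2 (fst z) (w_ns \<bullet> fst (snd z) + w_sp \<bullet> snd (snd z) - b) \<partial>M)"
      by (simp add: Z2f H2_def s_def)
    also have "\<dots> = (\<Sum>y\<in>UNIV. ennreal (K * (if y then eta else 1 - eta)) *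
        (\<integral>\<^sup>+t. H2 y t * ennreal (E y t) \<partial>lborel))"
      unfolding M_def E_def by (rule EI[OF H2m])
    also have "\<dots> = ennreal (K * eta) * ennreal J1 + ennreal (K * (1 - eta)) * ennreal J0"
    proof -
      have a: "(\<integral>\<^sup>+t. H2 y t * ennreal (E True t) \<partial>lborel) = ennreal J1" for y
      proof -
        have "(\<integral>\<^sup>+t. H2 y t * ennreal (E True t) \<partial>lborel) = (\<integral>\<^sup>+t. ennreal (indicator (sig -` A) t * sig t * e1 t) \<partial>lborel)"
          by (intro nn_integral_cong) (simp add: H2_def E1 ennreal_mult signn less_imp_le[OF e1p] mult.assoc)
        also have "\<dots> = ennreal J1" unfolding J1_def
          by (rule nnconv[OF iJ1]) (use sig01 e1p in \<open>simp add: less_imp_le\<close>)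
        finally show ?thesis .
      qed
      have c: "(\<integral>\<^sup>+t. H2 y t * ennreal (E False t) \<partial>lborel) = ennreal J0" for y
      proof -
        have "(\<integral>\<^sup>+t. H2 y t * ennreal (E False t) \<partial>lborel) = (\<integral>\<^sup>+t. ennreal (indicator (sig -` A) t * sig t * e0 t) \<partial>lborel)"
          by (intro nn_integral_cong) (simp add: H2_def E0 ennreal_mult signn less_imp_le[OF e0p] mult.assoc)
        also have "\<dots> = ennreal J0" unfolding J0_def
          by (rule nnconv[OF iJ0]) (use sig01 e0p in \<open>simp add: less_imp_le\<close>)
        finally show ?thesis .
      qed
      show ?thesis by (simp add: UNIV_bool a c add.commute)
    qed
    finally have R: "(\<integral>z. indicator Z2 z * f (snd z) \<partial>M)
        = enn2real (ennreal (K * eta) * ennreal J1 + ennreal (K * (1 - eta)) * ennreal J0)" .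
    have I1nn: "0 \<le> I1" unfolding I1_def by (rule integral_nonneg_AE) (simp add: less_imp_le[OF e1p])
    have J1nn: "0 \<le> J1" unfolding J1_def
      by (rule integral_nonneg_AE) (use sig01 e1p in \<open>simp add: less_imp_le\<close>)
    have J0nn: "0 \<le> J0" unfolding J0_def
      by (rule integral_nonneg_AE) (use sig01 e0p in \<open>simp add: less_imp_le\<close>)
    have cal: "measure M Z = (\<integral>z. indicator Z2 z * f (snd z) \<partial>M)"
      using calib A unfolding calibrated_on_def M_def[symmetric] f_def[symmetric] Z_def Z2_def by blast
    have "measure M Z = K * eta * I1"
      unfolding measure_def L using K eta I1nn by (simp add: ennreal_mult'[symmetric])
    moreover have "(\<integral>z. indicator Z2 z * f (snd z) \<partial>M) = K * eta * J1 + K * (1 - eta) * J0"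
      unfolding R using K eta J1nn J0nn
      by (simp add: ennreal_mult'[symmetric] ennreal_plus[symmetric] del: ennreal_plus)
    ultimately have "K * eta * I1 = K * eta * J1 + K * (1 - eta) * J0" using cal by simp
    then have "K * (eta * I1 - eta * J1 - (1 - eta) * J0) = 0" by (simp add: algebra_simps)
    then have eqn: "eta * I1 - eta * J1 = (1 - eta) * J0" using K by simp
    have "(\<integral>t. indicator (sig -` A) t * (eta * (1 - sig t) * e1 t) \<partial>lborel)
        = (\<integral>t. eta * (indicator (sig -` A) t * e1 t) - eta * (indicator (sig -` A) t * sig t * e1 t) \<partial>lborel)"
      by (simp add: algebra_simps)
    also have "\<dots> = eta * I1 - eta * J1" using iI1 iJ1 by (simp add: I1_def J1_def)
    also have "\<dots> = (1 - eta) * J0" by (rule eqn)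
    also have "\<dots> = (\<integral>t. (1 - eta) * (indicator (sig -` A) t * sig t * e0 t) \<partial>lborel)"
      using iJ0 by (simp add: J0_def)
    also have "\<dots> = (\<integral>t. indicator (sig -` A) t * ((1 - eta) * sig t * e0 t) \<partial>lborel)"
      by (simp add: algebra_simps)
    finally show ?thesis .
  qed
  have inj: "inj sig" using sig_bij by (simp add: bij_betw_def)
  have h1m: "(\<lambda>t. eta * (1 - sig t) * e1 t) \<in> borel_measurable borel" unfolding e1_def by measurable
  have h2m: "(\<lambda>t. (1 - eta) * sig t * e0 t) \<in> borel_measurable borel" unfolding e0_def by measurable
  have h1nn: "0 \<le> eta * (1 - sig t) * e1 t" for t using eta sig01[of t] e1p[of t] by simp
  have h2nn: "0 \<le> (1 - eta) * sig t * e0 t" for t using eta sig01[of t] e0p[of t] by simp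
  have b1: "\<bar>eta * (1 - sig t) * e1 t\<bar> \<le> eta * e1 t" for t
  proof -
    have "eta * (1 - sig t) * e1 t = (1 - sig t) * (eta * e1 t)" by simp
    also have "\<dots> \<le> eta * e1 t"
      by (rule mult_left_le_one_le) (use eta sig01[of t] e1p[of t] in auto)
    finally show ?thesis using h1nn[of t] by simp
  qed
  have b2: "\<bar>(1 - eta) * sig t * e0 t\<bar> \<le> (1 - eta) * e0 t" for t
  proof -
    have "(1 - eta) * sig t * e0 t = sig t * ((1 - eta) * e0 t)" by simp
    also have "\<dots> \<le> (1 - eta) * e0 t"
      by (rule mult_left_le_one_le) (use eta sig01[of t] e0p[of t] in auto)
    finally show ?thesis using h2nn[of t] by simp
  qed
  have ih1: "integrable lborel (\<lambda>t. eta * (1 - sig t) * e1 t)"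
    by (rule bounded_int[OF _ h1m b1]) (use i1 in simp)
  have ih2: "integrable lborel (\<lambda>t. (1 - eta) * sig t * e0 t)"
    by (rule bounded_int[OF _ h2m b2]) (use i0 in simp)
  have ae1: "AE t in lborel. eta * (1 - sig t) * e1 t \<le> (1 - eta) * sig t * e0 t"
    by (rule ae_le_from_preimage[OF sig_meas inj h1m h2m h1nn h2nn ih1 ih2]) (simp add: key)
  have ae2: "AE t in lborel. (1 - eta) * sig t * e0 t \<le> eta * (1 - sig t) * e1 t"
    by (rule ae_le_from_preimage[OF sig_meas inj h2m h1m h2nn h1nn ih2 ih1]) (simp add: key)
  show ?thesis using ae1 ae2 by eventually_elim (simp add: e1_def e0_def)
qed


lemma AE_lborel_ex:
  fixes P :: "real \<Rightarrow> bool"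
  assumes "AE t in lborel. P t"
  shows "\<exists>t. P t"
proof (rule ccontr)
  assume nex: "\<not> (\<exists>t. P t)"
  from assms[unfolded eventually_ae_filter] obtain N where N: "{t \<in> space lborel. \<not> P t} \<subseteq> N" "N \<in> null_sets lborel"
    by blast
  have "UNIV \<subseteq> N" using N(1) nex by auto
  then have "emeasure lborel (UNIV :: real set) \<le> emeasure lborel N"
    using N(2) by (intro emeasure_mono) auto
  then show False using null_setsD1[OF N(2)] by simp
qed

theorem theorem1:
  fixes k :: nat and eta :: real
    and mu_ns :: "real^'ns" and S_ns :: "real^'ns^'ns"
    and mu :: "nat \<Rightarrow> real^'sp" and S :: "nat \<Rightarrow> real^'sp^'sp"
    and sig :: "real \<Rightarrow> real"
    and w_ns :: "real^'ns" and w_sp :: "real^'sp" and b :: real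
  assumes k_gt: "k > 2 * CARD('sp)"
    and eta: "0 \<le> eta" "eta \<le> 1"
    and S_ns_spd: "spd S_ns"
    and S_spd: "\<And>i. i < k \<Longrightarrow> spd (S i)"
    and sig_bij: "bij_betw sig UNIV {0<..<1}"
    and sig_meas: "sig \<in> borel_measurable borel"
    and gp: "general_position k S mu"
    and calib: "\<And>i. i < k \<Longrightarrow>
       calibrated_on (lin_clf sig w_ns w_sp b) (env_measure eta mu_ns S_ns (mu i) (S i))"
  shows "w_sp = 0"
proof (rule ccontr)
  assume wnz: "w_sp \<noteq> 0"
  define v where "v i = w_ns \<bullet> (S_ns *v w_ns) + w_sp \<bullet> (S i *v w_sp)" for i
  define mw where "mw i = w_ns \<bullet> mu_ns + w_sp \<bullet> mu i" for i
  define E1 where "E1 i t = exp (- ((t - (mw i - b))^2) / (2 * v i))" for i t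
  define E0 where "E0 i t = exp (- ((t - (- mw i - b))^2) / (2 * v i))" for i t
  have vpos: "v i > 0" if "i < k" for i
    using env_integral(1)[OF S_ns_spd S_spd[OF that] wnz eta] by (simp add: v_def)
  have AEi: "AE t in lborel. eta * (1 - sig t) * E1 i t = (1 - eta) * sig t * E0 i t" if "i < k" for i
    using calib_ae[OF S_ns_spd S_spd[OF that] wnz eta sig_bij sig_meas calib[OF that]]
    by (simp add: E1_def E0_def v_def mw_def)
  have k0: "0 < k" using k_gt by simp
  have sig01: "0 < sig t \<and> sig t < 1" for t using sig_bij by (auto simp: bij_betw_def)
  have inj: "inj sig" using sig_bij by (simp add: bij_betw_def)
  have E0p: "E0 i t > 0" and E1p: "E1 i t > 0" for i t by (auto simp: E0_def E1_def)
  define \<beta> where "\<beta> i = 2 * mw i / v i" for i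
  have E1E0: "E1 i t = E0 i t * exp (\<beta> i * (t + b))" if "i < k" for i t
  proof -
    have v: "v i > 0" using vpos[OF that] .
    have "- ((t - (mw i - b))^2) / (2 * v i) = - ((t - (- mw i - b))^2) / (2 * v i) + \<beta> i * (t + b)"
      using v by (simp add: \<beta>_def field_simps power2_eq_square)
    then show ?thesis by (simp add: E1_def E0_def exp_add[symmetric])
  qed
  have eta_pos: "eta \<noteq> 0"
  proof
    assume e0: "eta = 0"
    obtain t where "eta * (1 - sig t) * E1 0 t = (1 - eta) * sig t * E0 0 t"
      using AE_lborel_ex[OF AEi[OF k0]] by blast
    then show False using e0 sig01[of t] E0p[of 0 t] by simp
  qed
  have eta_lt: "eta \<noteq> 1"
  proof
    assume e1: "eta = 1"
    obtain t where "eta * (1 - sig t) * E1 0 t = (1 - eta) * sig t * E0 0 t"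
      using AE_lborel_ex[OF AEi[OF k0]] by blast
    then show False using e1 sig01[of t] E1p[of 0 t] by simp
  qed
  have AEb: "AE t in lborel. eta * (1 - sig t) * exp (\<beta> i * (t + b)) = (1 - eta) * sig t" if "i < k" for i
    using AEi[OF that]
  proof eventually_elim
    case (elim t)
    then have "(eta * (1 - sig t) * exp (\<beta> i * (t + b))) * E0 i t = ((1 - eta) * sig t) * E0 i t"
      by (simp add: E1E0[OF that] mult_ac)
    then show ?case using E0p[of i t] by simp
  qed
  have beq: "\<beta> i = \<beta> 0" if "i < k" for i
  proof -
    have "AE t in lborel. (eta * (1 - sig t) * exp (\<beta> i * (t + b)) = (1 - eta) * sig t)
       \<and> (eta * (1 - sig t) * exp (\<beta> 0 * (t + b)) = (1 - eta) * sig t) \<and> t \<noteq> - b"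
      using AEb[OF that] AEb[OF k0] AE_lborel_singleton[of "- b"] by eventually_elim auto
    then obtain t where t: "eta * (1 - sig t) * exp (\<beta> i * (t + b)) = (1 - eta) * sig t"
      "eta * (1 - sig t) * exp (\<beta> 0 * (t + b)) = (1 - eta) * sig t" "t \<noteq> - b"
      using AE_lborel_ex by blast
    have nz: "eta * (1 - sig t) \<noteq> 0" using eta_pos sig01[of t] by simp
    have "(eta * (1 - sig t)) * exp (\<beta> i * (t + b)) = (eta * (1 - sig t)) * exp (\<beta> 0 * (t + b))"
      using t(1,2) by simp
    then have "exp (\<beta> i * (t + b)) = exp (\<beta> 0 * (t + b))" using nz by (simp only: mult_cancel_left) simp
    then have "\<beta> i * (t + b) = \<beta> 0 * (t + b)" by simp
    moreover have "t + b \<noteq> 0" using t(3) by linarith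
    ultimately show ?thesis by simp
  qed
  have b0: "\<beta> 0 \<noteq> 0"
  proof
    assume z: "\<beta> 0 = 0"
    have ae: "AE t in lborel. sig t = eta"
      using AEb[OF k0]
    proof eventually_elim
      case (elim t)
      then show ?case using z by (simp add: algebra_simps)
    qed
    obtain t1 where t1: "sig t1 = eta" using AE_lborel_ex[OF ae] by blast
    have "AE t in lborel. sig t = eta \<and> t \<noteq> t1"
      using ae AE_lborel_singleton[of t1] by eventually_elim auto
    then obtain t2 where "sig t2 = eta" "t2 \<noteq> t1" using AE_lborel_ex by blast
    then show False using t1 inj by (metis injD)
  qed
  define c where "c = \<beta> 0 / 2"
  have c0: "c \<noteq> 0" using b0 by (simp add: c_def)
  have mwv: "mw i = c * v i" if "i < k" for i
  proof -
    have "mw i = (\<beta> i / 2) * v i" using vpos[OF that] by (simp add: \<beta>_def)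
    then show ?thesis using beq[OF that] by (simp add: c_def)
  qed
  define x where "x = (- c) *\<^sub>R w_sp"
  have x0: "x \<noteq> 0" using c0 wnz by (simp add: x_def)
  define V where "V = {(S i *v x + mu i, 1::real) | i. i < k}"
  have "dim V = CARD('sp) + 1" using gp x0 unfolding general_position_def V_def by blast
  then have "dim V = DIM((real^'sp) \<times> real)" by simp
  then have spanV: "span V = UNIV" using dim_eq_full[of V] by simp
  define K0 where "K0 = c * (w_ns \<bullet> (S_ns *v w_ns)) - w_ns \<bullet> mu_ns"
  define z where "z = (w_sp, - K0)"
  have orth: "orthogonal z u" if "u \<in> V" for u
  proof -
    obtain i where i: "i < k" "u = (S i *v x + mu i, 1)" using \<open>u \<in> V\<close> by (auto simp: V_def)
    have "z \<bullet> u = w_sp \<bullet> (S i *v x) + w_sp \<bullet> mu i - K0"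
      by (simp add: z_def i(2) inner_add_right)
    also have "w_sp \<bullet> (S i *v x) = - c * (w_sp \<bullet> (S i *v w_sp))"
      unfolding x_def by (simp add: matrix_vector_mult_scaleR del: scaleR_minus_left)
    finally have "z \<bullet> u = - c * (w_sp \<bullet> (S i *v w_sp)) + w_sp \<bullet> mu i - K0" .
    moreover have "mw i = c * v i" by (rule mwv[OF i(1)])
    ultimately have "z \<bullet> u = 0"
      by (simp add: mw_def v_def K0_def algebra_simps)
    then show ?thesis by (simp add: orthogonal_def)
  qed
  have "orthogonal z z"
    by (rule orthogonal_to_span[of z V z]) (use spanV orth in auto)
  then have "z = 0" by (simp add: orthogonal_def)
  then have "w_sp = 0" by (simp add: z_def zero_prod_def)
  then show False using wnz by simp
qed


end
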